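(* Let $M$ be a homogeneous monoid that is automatic (respectively, biautomatic). Then for every finite alphabet $C$ representing a generating set of $M$, there is a language $K\subseteq C^*$ such that $(C,K)$ is an automatic (respectively, biautomatic) structure for $M$.
   Context: A monoid is homogeneous if it admits a finite presentation $\langle A\mid\mathcal{R}\rangle$ with $|u|=|v|$ for all $(u,v)\in\mathcal{R}$. For an alphabet $A$ and new symbol $\$$, $\delta_R$ maps a pair $(u,v)$ of words to the word over $(A\cup\{\$\})^2$ obtained by padding the shorter word at its end with $\$$'s; $\delta_L$ pads at the beginning. For a monoid $M$ generated by a finite alphabet $A$ and a regular language $L\subseteq A^*$ mapping onto $M$, let $L_a=\{(u,v)\in L\times L: ua=_M v\}$ and ${}_aL=\{(u,v)\in L\times L: au=_M v\}$ for $a\in A\cup\{\varepsilon\}$. $(A,L)$ is an automatic structure if all $L_a\delta_R$ are regular, a biautomatic structure if all $L_a\delta_R,{}_aL\delta_R,L_a\delta_L,{}_aL\delta_L$ are regular. $M$ is automatic (biautomatic) if it has an automatic (biautomatic) structure for some finite generating alphabet. *)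

theory Defs
  imports Main
begin

definition eval :: "('c \<Rightarrow> 'm::monoid_mult) \<Rightarrow> 'c list \<Rightarrow> 'm" where
  "eval \<phi> w = prod_list (map \<phi> w)"

definition regular :: "'b set \<Rightarrow> 'b list set \<Rightarrow> bool" where
  "regular \<Sigma> L \<longleftrightarrow> finite \<Sigma> \<and>
     (\<exists>(Q::nat set) q0 (\<delta>::nat \<Rightarrow> 'b \<Rightarrow> nat) F.
        finite Q \<and> q0 \<in> Q \<and> F \<subseteq> Q \<and>
        (\<forall>q\<in>Q. \<forall>a\<in>\<Sigma>. \<delta> q a \<in> Q) \<and>
        L = {w \<in> lists \<Sigma>. foldl \<delta> q0 w \<in> F})"

section \<open>Padding maps delta_R and delta_L; None plays the role of the symbol \$\<close>

definition padR :: "'c list \<Rightarrow> 'c list \<Rightarrow> ('c option \<times> 'c option) list" where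
  "padR u v = zip (map Some u @ replicate (length v - length u) None)
                  (map Some v @ replicate (length u - length v) None)"

definition padL :: "'c list \<Rightarrow> 'c list \<Rightarrow> ('c option \<times> 'c option) list" where
  "padL u v = zip (replicate (length v - length u) None @ map Some u)
                  (replicate (length u - length v) None @ map Some v)"

definition pair_alph :: "'c set \<Rightarrow> ('c option \<times> 'c option) set" where
  "pair_alph C = (insert None (Some ` C)) \<times> (insert None (Some ` C))"

definition short_words :: "'c set \<Rightarrow> 'c list set" where
  "short_words C = insert [] ((\<lambda>c. [c]) ` C)"

definition right_rel :: "('c \<Rightarrow> 'm::monoid_mult) \<Rightarrow> 'c list set \<Rightarrow> 'c list \<Rightarrow> ('c list \<times> 'c list) set" where
  "right_rel \<phi> L a = {(u, v). u \<in> L \<and> v \<in> L \<and> eval \<phi> (u @ a) = eval \<phi> v}"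

definition left_rel :: "('c \<Rightarrow> 'm::monoid_mult) \<Rightarrow> 'c list set \<Rightarrow> 'c list \<Rightarrow> ('c list \<times> 'c list) set" where
  "left_rel \<phi> L a = {(u, v). u \<in> L \<and> v \<in> L \<and> eval \<phi> (a @ u) = eval \<phi> v}"

definition automatic_structure :: "('c \<Rightarrow> 'm::monoid_mult) \<Rightarrow> 'c set \<Rightarrow> 'c list set \<Rightarrow> bool" where
  "automatic_structure \<phi> C L \<longleftrightarrow>
     finite C \<and> L \<subseteq> lists C \<and> regular C L \<and> eval \<phi> ` L = UNIV \<and>
     (\<forall>a \<in> short_words C.
        regular (pair_alph C) ((\<lambda>(u, v). padR u v) ` right_rel \<phi> L a))"

definition biautomatic_structure :: "('c \<Rightarrow> 'm::monoid_mult) \<Rightarrow> 'c set \<Rightarrow> 'c list set \<Rightarrow> bool" where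
  "biautomatic_structure \<phi> C L \<longleftrightarrow>
     finite C \<and> L \<subseteq> lists C \<and> regular C L \<and> eval \<phi> ` L = UNIV \<and>
     (\<forall>a \<in> short_words C.
        regular (pair_alph C) ((\<lambda>(u, v). padR u v) ` right_rel \<phi> L a) \<and>
        regular (pair_alph C) ((\<lambda>(u, v). padR u v) ` left_rel \<phi> L a) \<and>
        regular (pair_alph C) ((\<lambda>(u, v). padL u v) ` right_rel \<phi> L a) \<and>
        regular (pair_alph C) ((\<lambda>(u, v). padL u v) ` left_rel \<phi> L a))"

text \<open>A monoid is (bi)automatic if it has a (bi)automatic structure over some finite
generating alphabet; finite alphabets are taken (w.l.o.g., up to renaming) as
finite sets of natural numbers.\<close>

definition automatic :: "'m::monoid_mult itself \<Rightarrow> bool" where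
  "automatic _ \<longleftrightarrow> (\<exists>(A::nat set) (\<phi>::nat \<Rightarrow> 'm) L. automatic_structure \<phi> A L)"

definition biautomatic :: "'m::monoid_mult itself \<Rightarrow> bool" where
  "biautomatic _ \<longleftrightarrow> (\<exists>(A::nat set) (\<phi>::nat \<Rightarrow> 'm) L. biautomatic_structure \<phi> A L)"

definition rstep :: "('c list \<times> 'c list) set \<Rightarrow> ('c list \<times> 'c list) set" where
  "rstep R = {(x @ l @ y, x @ r @ y) | x l r y. (l, r) \<in> R}"

definition rcong :: "'c set \<Rightarrow> ('c list \<times> 'c list) set \<Rightarrow> ('c list \<times> 'c list) set" where
  "rcong A R = {(u, v). u \<in> lists A \<and> v \<in> lists A \<and> (u, v) \<in> (rstep R \<union> (rstep R)\<inverse>)\<^sup>*}"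

definition is_presentation :: "('c \<Rightarrow> 'm::monoid_mult) \<Rightarrow> 'c set \<Rightarrow> ('c list \<times> 'c list) set \<Rightarrow> bool" where
  "is_presentation \<phi> A R \<longleftrightarrow>
     (\<forall>(l, r) \<in> R. l \<in> lists A \<and> r \<in> lists A) \<and>
     eval \<phi> ` lists A = UNIV \<and>
     (\<forall>u \<in> lists A. \<forall>v \<in> lists A. eval \<phi> u = eval \<phi> v \<longleftrightarrow> (u, v) \<in> rcong A R)"

definition homogeneous :: "'m::monoid_mult itself \<Rightarrow> bool" where
  "homogeneous _ \<longleftrightarrow> (\<exists>(A::nat set) (\<phi>::nat \<Rightarrow> 'm) R.
     finite A \<and> finite R \<and> is_presentation \<phi> A R \<and>
     (\<forall>(u, v) \<in> R. length u = length v))"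

end

theory Submission
  imports Defs
begin

fun acc :: "('q \<Rightarrow> 'a \<Rightarrow> 'q set) \<Rightarrow> 'q set \<Rightarrow> 'q \<Rightarrow> 'a list \<Rightarrow> bool" where
  "acc \<Delta> F q [] = (q \<in> F)"
| "acc \<Delta> F q (a # w) = (\<exists>q' \<in> \<Delta> q a. acc \<Delta> F q' w)"

definition nstep :: "('q \<Rightarrow> 'a \<Rightarrow> 'q set) \<Rightarrow> 'q set \<Rightarrow> 'a \<Rightarrow> 'q set" where
  "nstep \<Delta> S a = (\<Union>q\<in>S. \<Delta> q a)"

lemma acc_foldl: "(\<exists>q\<in>S. acc \<Delta> F q w) \<longleftrightarrow> foldl (nstep \<Delta>) S w \<inter> F \<noteq> {}"
proof (induction w arbitrary: S)
  case Nil then show ?case by auto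
next
  case (Cons a w)
  have "(\<exists>q\<in>S. acc \<Delta> F q (a#w)) = (\<exists>q'\<in>nstep \<Delta> S a. acc \<Delta> F q' w)" by (auto simp: nstep_def)
  then show ?case using Cons[of "nstep \<Delta> S a"] by simp
qed

lemma nstep_sub: "S \<subseteq> U \<Longrightarrow> a \<in> \<Sigma> \<Longrightarrow> \<forall>q\<in>U. \<forall>a\<in>\<Sigma>. \<Delta> q a \<subseteq> U \<Longrightarrow> nstep \<Delta> S a \<subseteq> U"
  by (auto simp: nstep_def)

lemma foldl_nstep_sub: "S \<subseteq> U \<Longrightarrow> w \<in> lists \<Sigma> \<Longrightarrow> \<forall>q\<in>U. \<forall>a\<in>\<Sigma>. \<Delta> q a \<subseteq> U \<Longrightarrow> foldl (nstep \<Delta>) S w \<subseteq> U"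
proof (induction w arbitrary: S)
  case Nil then show ?case by auto
next
  case (Cons a w)
  then show ?case using nstep_sub[of S U a \<Sigma> \<Delta>] by simp
qed

lemma nfa_regular:
  fixes U :: "'q set" and \<Sigma> :: "'a set"
  assumes "finite \<Sigma>" "finite U" "I \<subseteq> U" "\<forall>q\<in>U. \<forall>a\<in>\<Sigma>. \<Delta> q a \<subseteq> U"
  shows "regular \<Sigma> {w \<in> lists \<Sigma>. \<exists>q\<in>I. acc \<Delta> F q w}"
proof -
  have "finite (Pow U)" using assms(2) by simp
  then obtain enc :: "'q set \<Rightarrow> nat" and n where enc: "enc ` Pow U = {i. i < n}" "inj_on enc (Pow U)"
    using finite_imp_inj_to_nat_seg by blast
  define dec where "dec = inv_into (Pow U) enc"
  have dec_enc: "\<And>S. S \<subseteq> U \<Longrightarrow> dec (enc S) = S" unfolding dec_def using enc(2) by (simp add: inv_into_f_f)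
  define \<delta> where "\<delta> = (\<lambda>k a. enc (nstep \<Delta> (dec k) a))"
  define Q where "Q = enc ` Pow U"
  define FF where "FF = enc ` {S \<in> Pow U. S \<inter> F \<noteq> {}}"
  have fold: "foldl \<delta> (enc S) w = enc (foldl (nstep \<Delta>) S w)" if "S \<subseteq> U" "w \<in> lists \<Sigma>" for S w
    using that
  proof (induction w arbitrary: S)
    case Nil then show ?case by simp
  next
    case (Cons a w)
    have "nstep \<Delta> S a \<subseteq> U" using Cons assms(4) nstep_sub[of S U a \<Sigma> \<Delta>] by simp
    then show ?case using Cons by (simp add: \<delta>_def dec_enc)
  qed
  have h1: "finite Q" unfolding Q_def using \<open>finite (Pow U)\<close> by simp
  have h2: "enc I \<in> Q" unfolding Q_def using assms(3) by simp
  have h3: "FF \<subseteq> Q" unfolding FF_def Q_def by auto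
  have h4: "\<forall>q\<in>Q. \<forall>a\<in>\<Sigma>. \<delta> q a \<in> Q" unfolding Q_def \<delta>_def
    using dec_enc nstep_sub[OF _ _ assms(4)] by fastforce
  have h5: "{w \<in> lists \<Sigma>. \<exists>q\<in>I. acc \<Delta> F q w} = {w \<in> lists \<Sigma>. foldl \<delta> (enc I) w \<in> FF}"
  proof (intro Collect_cong conj_cong refl)
    fix w assume w: "w \<in> lists \<Sigma>"
    have sub: "foldl (nstep \<Delta>) I w \<subseteq> U" using foldl_nstep_sub[OF assms(3) w assms(4)] .
    have "(foldl \<delta> (enc I) w \<in> FF) = (foldl (nstep \<Delta>) I w \<inter> F \<noteq> {})"
      unfolding fold[OF assms(3) w] FF_def using sub inj_onD[OF enc(2)]
      by (smt (verit, best) Int_emptyI PowD PowI disjoint_iff image_iff mem_Collect_eq)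
    then show "(\<exists>q\<in>I. acc \<Delta> F q w) = (foldl \<delta> (enc I) w \<in> FF)" using acc_foldl by metis
  qed
  show ?thesis unfolding regular_def using assms(1) h1 h2 h3 h4 h5 by (intro conjI exI[of _ Q] exI[of _ "enc I"] exI[of _ \<delta>] exI[of _ FF]) auto
qed

lemma acc_det: "acc (\<lambda>q a. {\<delta> q a}) F q w \<longleftrightarrow> foldl \<delta> q w \<in> F"
  by (induction w arbitrary: q) auto

lemma regularE:
  assumes "regular \<Sigma> L"
  obtains Q q0 \<delta> F where "finite \<Sigma>" "finite (Q::nat set)" "q0 \<in> Q" "F \<subseteq> Q" "\<forall>q\<in>Q. \<forall>a\<in>\<Sigma>. \<delta> q a \<in> Q"
    "L = {w \<in> lists \<Sigma>. foldl \<delta> q0 w \<in> F}"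
  using assms unfolding regular_def by blast

lemma foldl_in: "q \<in> Q \<Longrightarrow> \<forall>q\<in>Q. \<forall>a\<in>\<Sigma>. \<delta> q a \<in> Q \<Longrightarrow> w \<in> lists \<Sigma> \<Longrightarrow> foldl \<delta> q w \<in> Q"
  by (induction w arbitrary: q) auto

lemma regular_subset: "regular \<Sigma> L \<Longrightarrow> L \<subseteq> lists \<Sigma>"
  unfolding regular_def by auto

lemma regular_Int:
  assumes "regular \<Sigma> L1" "regular \<Sigma> L2"
  shows "regular \<Sigma> (L1 \<inter> L2)"
proof -
  obtain Q1 q1 \<delta>1 F1 where A: "finite \<Sigma>" "finite (Q1::nat set)" "q1 \<in> Q1" "F1 \<subseteq> Q1" "\<forall>q\<in>Q1. \<forall>a\<in>\<Sigma>. \<delta>1 q a \<in> Q1"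
    "L1 = {w \<in> lists \<Sigma>. foldl \<delta>1 q1 w \<in> F1}" by (rule regularE[OF assms(1)])
  obtain Q2 q2 \<delta>2 F2 where B: "finite \<Sigma>" "finite (Q2::nat set)" "q2 \<in> Q2" "F2 \<subseteq> Q2" "\<forall>q\<in>Q2. \<forall>a\<in>\<Sigma>. \<delta>2 q a \<in> Q2"
    "L2 = {w \<in> lists \<Sigma>. foldl \<delta>2 q2 w \<in> F2}" by (rule regularE[OF assms(2)])
  define \<Delta> where "\<Delta> = (\<lambda>(p,q) a. {(\<delta>1 p a, \<delta>2 q a)})"
  have acc: "acc \<Delta> (F1 \<times> F2) (p,q) w \<longleftrightarrow> foldl \<delta>1 p w \<in> F1 \<and> foldl \<delta>2 q w \<in> F2" for p q w
    by (induction w arbitrary: p q) (auto simp: \<Delta>_def)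
  have "regular \<Sigma> {w \<in> lists \<Sigma>. \<exists>s\<in>{(q1,q2)}. acc \<Delta> (F1 \<times> F2) s w}"
  proof (rule nfa_regular[where U="Q1 \<times> Q2"])
    show "finite \<Sigma>" by fact
    show "finite (Q1 \<times> Q2)" using A(2) B(2) by simp
    show "{(q1, q2)} \<subseteq> Q1 \<times> Q2" using A(3) B(3) by simp
    show "\<forall>q\<in>Q1 \<times> Q2. \<forall>a\<in>\<Sigma>. \<Delta> q a \<subseteq> Q1 \<times> Q2"
      using A(5) B(5) unfolding \<Delta>_def by fastforce
  qed
  moreover have "{w \<in> lists \<Sigma>. \<exists>s\<in>{(q1,q2)}. acc \<Delta> (F1 \<times> F2) s w} = L1 \<inter> L2"
  proof -
    have "\<And>w. (\<exists>s\<in>{(q1,q2)}. acc \<Delta> (F1 \<times> F2) s w) = (foldl \<delta>1 q1 w \<in> F1 \<and> foldl \<delta>2 q2 w \<in> F2)"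
      using acc by simp
    then show ?thesis unfolding A(6) B(6) by auto
  qed
  ultimately show ?thesis by simp
qed

lemma regular_rev:
  assumes "regular \<Sigma> L"
  shows "regular \<Sigma> (rev ` L)"
proof -
  obtain Q q0 \<delta> F where A: "finite \<Sigma>" "finite (Q::nat set)" "q0 \<in> Q" "F \<subseteq> Q" "\<forall>q\<in>Q. \<forall>a\<in>\<Sigma>. \<delta> q a \<in> Q"
    "L = {w \<in> lists \<Sigma>. foldl \<delta> q0 w \<in> F}" by (rule regularE[OF assms(1)])
  define \<Delta> where "\<Delta> = (\<lambda>q a. {p \<in> Q. \<delta> p a = q})"
  have key: "q \<in> Q \<Longrightarrow> acc \<Delta> {q0} q (rev w) \<longleftrightarrow> foldl \<delta> q0 w = q" if "w \<in> lists \<Sigma>" for w q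
    using that
  proof (induction w arbitrary: q rule: rev_induct)
    case Nil then show ?case by auto
  next
    case (snoc a w)
    have "foldl \<delta> q0 w \<in> Q" using foldl_in[OF A(3) A(5)] snoc by simp
    then show ?case using snoc by (auto simp: \<Delta>_def)
  qed
  have "regular \<Sigma> {w \<in> lists \<Sigma>. \<exists>q\<in>F. acc \<Delta> {q0} q w}"
    apply (rule nfa_regular[where U=Q])
    using A(1,2,4) by (auto simp: \<Delta>_def)
  moreover have "{w \<in> lists \<Sigma>. \<exists>q\<in>F. acc \<Delta> {q0} q w} = rev ` L"
  proof (intro equalityI subsetI)
    fix w assume "w \<in> {w \<in> lists \<Sigma>. \<exists>q\<in>F. acc \<Delta> {q0} q w}"
    then obtain q where w: "w \<in> lists \<Sigma>" "q \<in> F" "acc \<Delta> {q0} q w" by auto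
    have "rev w \<in> lists \<Sigma>" using w by (auto simp: in_lists_conv_set)
    then have "foldl \<delta> q0 (rev w) = q" using key[of "rev w" q] w A(4) by auto
    then have "rev w \<in> L" using A(6) w \<open>rev w \<in> lists \<Sigma>\<close> by simp
    then show "w \<in> rev ` L" by force
  next
    fix w assume "w \<in> rev ` L"
    then obtain x where x: "x \<in> L" "w = rev x" by auto
    have xl: "x \<in> lists \<Sigma>" "foldl \<delta> q0 x \<in> F" using x A(6) by auto
    have "foldl \<delta> q0 x \<in> Q" using foldl_in[OF A(3) A(5) xl(1)] .
    then have "acc \<Delta> {q0} (foldl \<delta> q0 x) (rev x)" using key[OF xl(1)] by simp
    then show "w \<in> {w \<in> lists \<Sigma>. \<exists>q\<in>F. acc \<Delta> {q0} q w}" using x xl by (auto simp: in_lists_conv_set)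
  qed
  ultimately show ?thesis by simp
qed

lemma regular_invmap:
  assumes "regular \<Gamma> L" "finite \<Sigma>" "\<forall>a\<in>\<Sigma>. g a \<in> \<Gamma>"
  shows "regular \<Sigma> {w \<in> lists \<Sigma>. map g w \<in> L}"
proof -
  obtain Q q0 \<delta> F where A: "finite \<Gamma>" "finite (Q::nat set)" "q0 \<in> Q" "F \<subseteq> Q" "\<forall>q\<in>Q. \<forall>a\<in>\<Gamma>. \<delta> q a \<in> Q"
    "L = {w \<in> lists \<Gamma>. foldl \<delta> q0 w \<in> F}" by (rule regularE[OF assms(1)])
  define \<Delta> where "\<Delta> = (\<lambda>q a. {\<delta> q (g a)})"
  have "regular \<Sigma> {w \<in> lists \<Sigma>. \<exists>q\<in>{q0}. acc \<Delta> F q w}"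
    apply (rule nfa_regular[where U=Q])
    using A(2,3,5) assms(2,3) by (auto simp: \<Delta>_def)
  moreover have "{w \<in> lists \<Sigma>. \<exists>q\<in>{q0}. acc \<Delta> F q w} = {w \<in> lists \<Sigma>. map g w \<in> L}"
  proof -
    have "\<And>w. acc \<Delta> F q0 w = (foldl \<delta> q0 (map g w) \<in> F)"
      unfolding \<Delta>_def acc_det[of "\<lambda>q a. \<delta> q (g a)", simplified] by (simp add: foldl_map)
    moreover have "\<And>w. w \<in> lists \<Sigma> \<Longrightarrow> map g w \<in> lists \<Gamma>" using assms(3) by auto
    ultimately show ?thesis unfolding A(6) by auto
  qed
  ultimately show ?thesis by simp
qed

lemma regular_map:
  assumes "regular \<Sigma> L" "finite \<Gamma>" "\<forall>a\<in>\<Sigma>. g a \<in> \<Gamma>"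
  shows "regular \<Gamma> (map g ` L)"
proof -
  obtain Q q0 \<delta> F where A: "finite \<Sigma>" "finite (Q::nat set)" "q0 \<in> Q" "F \<subseteq> Q" "\<forall>q\<in>Q. \<forall>a\<in>\<Sigma>. \<delta> q a \<in> Q"
    "L = {w \<in> lists \<Sigma>. foldl \<delta> q0 w \<in> F}" by (rule regularE[OF assms(1)])
  define \<Delta> where "\<Delta> = (\<lambda>q c. {\<delta> q b | b. b \<in> \<Sigma> \<and> g b = c})"
  have key: "acc \<Delta> F q w' \<longleftrightarrow> (\<exists>w\<in>lists \<Sigma>. map g w = w' \<and> foldl \<delta> q w \<in> F)" for q w'
  proof (induction w' arbitrary: q)
    case Nil then show ?case by simp
  next
    case (Cons c w')
    show ?case
    proof
      assume "acc \<Delta> F q (c # w')"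
      then obtain b where b: "b \<in> \<Sigma>" "g b = c" "acc \<Delta> F (\<delta> q b) w'" by (auto simp: \<Delta>_def)
      then obtain w where "w\<in>lists \<Sigma>" "map g w = w'" "foldl \<delta> (\<delta> q b) w \<in> F" using Cons by blast
      then show "\<exists>w\<in>lists \<Sigma>. map g w = c # w' \<and> foldl \<delta> q w \<in> F"
        using b by (intro bexI[of _ "b # w"]) auto
    next
      assume "\<exists>w\<in>lists \<Sigma>. map g w = c # w' \<and> foldl \<delta> q w \<in> F"
      then obtain ww where ww: "ww \<in> lists \<Sigma>" "map g ww = c # w'" "foldl \<delta> q ww \<in> F" by metis
      then obtain b w where bw: "ww = b # w" by (cases ww) auto
      then have "b # w \<in> lists \<Sigma>" "g b = c" "map g w = w'" "foldl \<delta> (\<delta> q b) w \<in> F" using ww by auto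
      then show "acc \<Delta> F q (c # w')" using Cons by (auto simp: \<Delta>_def)
    qed
  qed
  have "regular \<Gamma> {w \<in> lists \<Gamma>. \<exists>q\<in>{q0}. acc \<Delta> F q w}"
    apply (rule nfa_regular[where U=Q])
    using A(2,3,5) assms(2,3) by (auto simp: \<Delta>_def)
  moreover have "{w \<in> lists \<Gamma>. \<exists>q\<in>{q0}. acc \<Delta> F q w} = map g ` L"
  proof (intro equalityI subsetI)
    fix w' assume "w' \<in> {w \<in> lists \<Gamma>. \<exists>q\<in>{q0}. acc \<Delta> F q w}"
    then obtain w where "w\<in>lists \<Sigma>" "map g w = w'" "foldl \<delta> q0 w \<in> F" using key by auto
    then show "w' \<in> map g ` L" unfolding A(6) by auto
  next
    fix w' assume "w' \<in> map g ` L"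
    then obtain w where "w\<in>lists \<Sigma>" "map g w = w'" "foldl \<delta> q0 w \<in> F" unfolding A(6) by auto
    moreover have "map g w \<in> lists \<Gamma>" using assms(3) \<open>w\<in>lists \<Sigma>\<close> by auto
    ultimately show "w' \<in> {w \<in> lists \<Gamma>. \<exists>q\<in>{q0}. acc \<Delta> F q w}" using key by blast
  qed
  ultimately show ?thesis by simp
qed

lemma regular_trail:
  assumes "regular \<Sigma> L" "e \<in> \<Sigma>"
  shows "regular \<Sigma> {w @ replicate k e | w k. w \<in> L}"
proof -
  obtain Q q0 \<delta> F where A: "finite \<Sigma>" "finite (Q::nat set)" "q0 \<in> Q" "F \<subseteq> Q" "\<forall>q\<in>Q. \<forall>a\<in>\<Sigma>. \<delta> q a \<in> Q"
    "L = {w \<in> lists \<Sigma>. foldl \<delta> q0 w \<in> F}" by (rule regularE[OF assms(1)])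
  define \<Delta> where "\<Delta> = (\<lambda>(q, b::bool) a. if b then (if a = e then {(q,True)} else {})
     else {(\<delta> q a, False)} \<union> (if a = e \<and> q \<in> F then {(q,True)} else {}))"
  have k1: "acc \<Delta> (F \<times> UNIV) (q, True) w \<longleftrightarrow> q \<in> F \<and> w = replicate (length w) e" for q w
    by (induction w) (auto simp: \<Delta>_def)
  have k2: "acc \<Delta> (F \<times> UNIV) (q, False) w \<longleftrightarrow> (\<exists>w1 k. w = w1 @ replicate k e \<and> foldl \<delta> q w1 \<in> F)" for q w
  proof (induction w arbitrary: q)
    case Nil then show ?case by auto
  next
    case (Cons a w)
    have "acc \<Delta> (F \<times> UNIV) (q, False) (a # w) \<longleftrightarrow>
      acc \<Delta> (F \<times> UNIV) (\<delta> q a, False) w \<or> (a = e \<and> q \<in> F \<and> acc \<Delta> (F \<times> UNIV) (q, True) w)"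
      by (auto simp: \<Delta>_def)
    also have "\<dots> \<longleftrightarrow> (\<exists>w1 k. a # w = w1 @ replicate k e \<and> foldl \<delta> q w1 \<in> F)"
    proof
      assume "acc \<Delta> (F \<times> UNIV) (\<delta> q a, False) w \<or> (a = e \<and> q \<in> F \<and> acc \<Delta> (F \<times> UNIV) (q, True) w)"
      then show "\<exists>w1 k. a # w = w1 @ replicate k e \<and> foldl \<delta> q w1 \<in> F"
      proof
        assume "acc \<Delta> (F \<times> UNIV) (\<delta> q a, False) w"
        then obtain w1 k where "w = w1 @ replicate k e" "foldl \<delta> (\<delta> q a) w1 \<in> F" using Cons by blast
        then show ?thesis by (intro exI[of _ "a # w1"] exI[of _ k]) auto
      next
        assume "a = e \<and> q \<in> F \<and> acc \<Delta> (F \<times> UNIV) (q, True) w"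
        then have "a = e" "q \<in> F" "w = replicate (length w) e" using k1 by auto
        then have "a # w = [] @ replicate (Suc (length w)) e" by (metis append_Nil replicate_Suc)
        then show ?thesis using \<open>q \<in> F\<close> by (intro exI[of _ "[]"] exI[of _ "Suc (length w)"]) simp
      qed
    next
      assume "\<exists>w1 k. a # w = w1 @ replicate k e \<and> foldl \<delta> q w1 \<in> F"
      then obtain w1 k where h: "a # w = w1 @ replicate k e" "foldl \<delta> q w1 \<in> F" by blast
      show "acc \<Delta> (F \<times> UNIV) (\<delta> q a, False) w \<or> (a = e \<and> q \<in> F \<and> acc \<Delta> (F \<times> UNIV) (q, True) w)"
      proof (cases w1)
        case Nil
        then obtain k' where "k = Suc k'" "a = e" "w = replicate k' e" using h by (cases k) auto
        then show ?thesis using h Nil k1 by auto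
      next
        case (Cons b w1')
        then show ?thesis using h Cons.IH by auto
      qed
    qed
    finally show ?case .
  qed
  have "regular \<Sigma> {w \<in> lists \<Sigma>. \<exists>s\<in>{(q0,False)}. acc \<Delta> (F \<times> UNIV) s w}"
    apply (rule nfa_regular[where U="Q \<times> UNIV"])
    using A(1,2,3,5) by (auto simp: \<Delta>_def)
  moreover have "{w \<in> lists \<Sigma>. \<exists>s\<in>{(q0,False)}. acc \<Delta> (F \<times> UNIV) s w} = {w @ replicate k e | w k. w \<in> L}"
  proof (intro equalityI subsetI)
    fix x assume "x \<in> {w \<in> lists \<Sigma>. \<exists>s\<in>{(q0,False)}. acc \<Delta> (F \<times> UNIV) s w}"
    then have x: "x \<in> lists \<Sigma>" "acc \<Delta> (F \<times> UNIV) (q0, False) x" by auto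
    then obtain w1 k where "x = w1 @ replicate k e" "foldl \<delta> q0 w1 \<in> F" using k2 by metis
    then show "x \<in> {w @ replicate k e | w k. w \<in> L}" unfolding A(6) using x by auto
  next
    fix x assume "x \<in> {w @ replicate k e | w k. w \<in> L}"
    then obtain w1 k where h: "x = w1 @ replicate k e" "w1 \<in> lists \<Sigma>" "foldl \<delta> q0 w1 \<in> F" unfolding A(6) by auto
    then have "acc \<Delta> (F \<times> UNIV) (q0, False) x" using k2 by metis
    then show "x \<in> {w \<in> lists \<Sigma>. \<exists>s\<in>{(q0,False)}. acc \<Delta> (F \<times> UNIV) s w}" using h assms(2) by auto
  qed
  ultimately show ?thesis by simp
qed

fun ol :: "'a option \<Rightarrow> 'a list" where
  "ol None = []" | "ol (Some a) = [a]"

definition strip :: "'a option list \<Rightarrow> 'a list" where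
  "strip xs = concat (map ol xs)"

lemma strip_simps[simp]: "strip [] = []" "strip (a # xs) = ol a @ strip xs" "strip (xs @ ys) = strip xs @ strip ys"
  "strip (map Some x) = x" "strip (replicate k None) = []"
  unfolding strip_def by (induction x; simp) (induction k; simp)+

lemma strip_length: "length (strip xs) \<le> length xs"
proof (induction xs)
  case (Cons a xs) then show ?case by (cases a) auto
qed simp

lemma padR_len[simp]: "length (padR x y) = max (length x) (length y)"
  unfolding padR_def by simp

lemma padR_fst: "map fst (padR x y) = map Some x @ replicate (length y - length x) None"
  unfolding padR_def by (simp add: map_fst_zip)

lemma padR_snd: "map snd (padR x y) = map Some y @ replicate (length x - length y) None"
  unfolding padR_def by (simp add: map_snd_zip)

lemma strip_fst_padR[simp]: "strip (map fst (padR x y)) = x"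
  by (simp add: padR_fst)

lemma strip_snd_padR[simp]: "strip (map snd (padR x y)) = y"
  by (simp add: padR_snd)

lemma padR_inj: "padR x y = padR x' y' \<Longrightarrow> x = x' \<and> y = y'"
  by (metis strip_fst_padR strip_snd_padR)

lemma padR_Cons2[simp]: "padR (a # x) (b # y) = (Some a, Some b) # padR x y"
  unfolding padR_def by simp

lemma padR_Nil1[simp]: "padR [] y = map (\<lambda>b. (None, Some b)) y"
  unfolding padR_def by (simp add: zip_replicate1)

lemma padR_Nil2[simp]: "padR x [] = map (\<lambda>a. (Some a, None)) x"
  unfolding padR_def by (simp add: zip_replicate2)

lemma padR_take: "take i (padR x y) = padR (take i x) (take i y)"
proof (induction x arbitrary: y i)
  case Nil then show ?case by (simp add: take_map)
next
  case (Cons a x)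
  then show ?case
    by (cases y; cases i) (auto simp: take_map)
qed

lemma padL_rev: "padL u v = rev (padR (rev u) (rev v))"
  unfolding padL_def padR_def by (simp add: rev_map zip_rev[symmetric])

lemma padR_lists: "padR x y \<in> lists (pair_alph C) \<longleftrightarrow> x \<in> lists C \<and> y \<in> lists C"
proof (induction x arbitrary: y)
  case Nil then show ?case by (auto simp: pair_alph_def)
next
  case (Cons a x)
  then show ?case by (cases y) (auto simp: pair_alph_def)
qed

lemma finite_pair_alph: "finite C \<Longrightarrow> finite (pair_alph C)"
  unfolding pair_alph_def by simp

fun shD :: "nat \<Rightarrow> ('c option \<times> 'c option) \<Rightarrow> nat set" where
  "shD 0 (Some a, Some b) = {0}"
| "shD 0 (None, Some b) = {1}"
| "shD 0 (Some a, None) = {2}"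
| "shD (Suc 0) (None, Some b) = {1}"
| "shD (Suc (Suc 0)) (Some a, None) = {2}"
| "shD _ _ = {}"

lemma shD_1: "acc shD {0,1,2} 1 w \<longleftrightarrow> (\<exists>y. w = map (\<lambda>b. (None, Some b)) y)"
proof (induction w)
  case Nil then show ?case by auto
next
  case (Cons c w)
  obtain \<alpha> \<beta> where c: "c = (\<alpha>, \<beta>)" by force
  show ?case
  proof (cases \<alpha>; cases \<beta>)
    fix b assume "\<alpha> = None" "\<beta> = Some b"
    then show ?thesis using Cons c by (auto simp: Cons_eq_map_conv)
  qed (use c in \<open>auto simp: Cons_eq_map_conv\<close>)
qed

lemma shD_2: "acc shD {0,1,2} 2 w \<longleftrightarrow> (\<exists>x. w = map (\<lambda>a. (Some a, None)) x)"
proof (induction w)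
  case Nil then show ?case by auto
next
  case (Cons c w)
  obtain \<alpha> \<beta> where c: "c = (\<alpha>, \<beta>)" by force
  show ?case
  proof (cases \<alpha>; cases \<beta>)
    fix a assume "\<alpha> = Some a" "\<beta> = None"
    then show ?thesis using Cons c by (auto simp: Cons_eq_map_conv numeral_2_eq_2)
  qed (use c in \<open>auto simp: Cons_eq_map_conv numeral_2_eq_2\<close>)
qed

lemma shD_0: "acc shD {0,1,2} 0 w \<longleftrightarrow> (\<exists>x y. w = padR x y)"
proof
  show "acc shD {0,1,2} 0 w \<Longrightarrow> \<exists>x y. w = padR x y"
  proof (induction w)
    case Nil then show ?case by (intro exI[of _ "[]"]) auto
  next
    case (Cons c w)
    obtain \<alpha> \<beta> where c: "c = (\<alpha>, \<beta>)" by force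
    show ?case
    proof (cases \<alpha>)
      case None
      then obtain b where b: "\<beta> = Some b" using Cons.prems c by (cases \<beta>) auto
      then have "acc shD {0,1,2} 1 w" using Cons.prems c None by auto
      then obtain y where "w = map (\<lambda>b. (None, Some b)) y" using shD_1 by auto
      then show ?thesis using c None b by (intro exI[of _ "[]"] exI[of _ "b # y"]) auto
    next
      case (Some a)
      show ?thesis
      proof (cases \<beta>)
        case None
        then have "acc shD {0,1,2} 2 w" using Cons.prems c Some by (auto simp: numeral_2_eq_2)
        then obtain x where "w = map (\<lambda>a. (Some a, None)) x" using shD_2 by auto
        then show ?thesis using c None Some by (intro exI[of _ "a # x"] exI[of _ "[]"]) auto
      next
        case (Some b)
        then have "acc shD {0,1,2} 0 w" using Cons.prems c \<open>\<alpha> = Some a\<close> by auto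
        then obtain x y where "w = padR x y" using Cons.IH by auto
        then show ?thesis using c Some \<open>\<alpha> = Some a\<close> by (intro exI[of _ "a # x"] exI[of _ "b # y"]) auto
      qed
    qed
  qed
next
  assume "\<exists>x y. w = padR x y"
  then obtain x y where w: "w = padR x y" by auto
  have "acc shD {0,1,2} 0 (padR x y)"
  proof (induction x arbitrary: y)
    case Nil
    have "acc shD {0,1,2} 1 (map (\<lambda>b. (None, Some b)) y')" for y' using shD_1 by auto
    then show ?case by (cases y) auto
  next
    case (Cons a x)
    have "acc shD {0,1,2} 2 (map (\<lambda>a. (Some a, None)) x')" for x' using shD_2 by auto
    then show ?case using Cons by (cases y) (auto simp: numeral_2_eq_2)
  qed
  then show "acc shD {0,1,2} 0 w" using w by simp
qed

lemma regular_shape: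
  assumes "finite C"
  shows "regular (pair_alph C) ((\<lambda>(x,y). padR x y) ` (lists C \<times> lists C))"
proof -
  have "regular (pair_alph C) {w \<in> lists (pair_alph C). \<exists>q\<in>{0}. acc shD {0,1,2} q w}"
  proof (rule nfa_regular[where U="{0,1,2}"])
    show "\<forall>q\<in>{0, 1, 2}. \<forall>a\<in>pair_alph C. shD q a \<subseteq> {0, 1, 2}"
    proof (intro ballI)
      fix q and a :: "'a option \<times> 'a option"
      show "shD q a \<subseteq> {0, 1, 2}" by (induction q a rule: shD.induct) auto
    qed
  qed (auto simp: finite_pair_alph assms)
  moreover have "{w \<in> lists (pair_alph C). \<exists>q\<in>{0}. acc shD {0,1,2} q w} = (\<lambda>(x,y). padR x y) ` (lists C \<times> lists C)"
  proof (intro equalityI subsetI)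
    fix w assume "w \<in> {w \<in> lists (pair_alph C). \<exists>q\<in>{0}. acc shD {0,1,2} q w}"
    then have w: "w \<in> lists (pair_alph C)" "acc shD {0,1,2} 0 w" by auto
    then obtain x y where xy: "w = padR x y" using shD_0 by metis
    then have "x \<in> lists C" "y \<in> lists C" using w padR_lists by metis+
    then show "w \<in> (\<lambda>(x,y). padR x y) ` (lists C \<times> lists C)" using xy by auto
  next
    fix w assume "w \<in> (\<lambda>(x,y). padR x y) ` (lists C \<times> lists C)"
    then obtain x y where xy: "w = padR x y" "x \<in> lists C" "y \<in> lists C" by auto
    then have "w \<in> lists (pair_alph C)" using padR_lists by metis
    moreover have "acc shD {0,1,2} 0 w" using shD_0 xy by metis
    ultimately show "w \<in> {w \<in> lists (pair_alph C). \<exists>q\<in>{0}. acc shD {0,1,2} q w}" by auto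
  qed
  ultimately show ?thesis by simp
qed

lemma short_path:
  assumes "finite Q" "q \<in> Q" "\<forall>q\<in>Q. \<forall>a\<in>\<Sigma>. \<delta> q a \<in> Q" "z \<in> lists \<Sigma>" "foldl \<delta> q z \<in> F"
  shows "\<exists>z'\<in>lists \<Sigma>. length z' \<le> card Q \<and> foldl \<delta> q z' \<in> F"
  using assms(4,5)
proof (induction "length z" arbitrary: z rule: less_induct)
  case less
  show ?case
  proof (cases "length z \<le> card Q")
    case True then show ?thesis using less.prems by blast
  next
    case False
    define ss where "ss = map (\<lambda>k. foldl \<delta> q (take k z)) [0..<Suc (length z)]"
    have "set ss \<subseteq> Q"
    proof
      fix s assume "s \<in> set ss"
      then obtain k where "s = foldl \<delta> q (take k z)" unfolding ss_def set_map by blast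
      moreover have "take k z \<in> lists \<Sigma>" using less.prems(1) by (auto dest: in_set_takeD)
      ultimately show "s \<in> Q" using foldl_in[OF assms(2) assms(3)] by blast
    qed
    then have "card (set ss) \<le> card Q" using assms(1) by (simp add: card_mono)
    have len: "length ss = Suc (length z)" unfolding ss_def by simp
    have "\<not> distinct ss"
    proof
      assume "distinct ss"
      then have "card (set ss) = Suc (length z)" using len distinct_card by metis
      then show False using \<open>card (set ss) \<le> card Q\<close> False by linarith
    qed
    then obtain i j where ij: "i < length ss" "j < length ss" "i \<noteq> j" "ss ! i = ss ! j"
      by (auto simp: distinct_conv_nth)
    obtain k1 k2 where k: "k1 < k2" "k2 \<le> length z" "foldl \<delta> q (take k1 z) = foldl \<delta> q (take k2 z)"
    proof (cases "i < j")
      case True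
      then show ?thesis using ij that[of i j] unfolding ss_def by (simp del: upt_Suc)
    next
      case False
      then show ?thesis using ij that[of j i] unfolding ss_def by (simp del: upt_Suc)
    qed
    define z' where "z' = take k1 z @ drop k2 z"
    have "length z' < length z" using k unfolding z'_def by simp
    moreover have "z' \<in> lists \<Sigma>" using less.prems(1) unfolding z'_def
      by (auto dest: in_set_takeD in_set_dropD)
    moreover have "foldl \<delta> q z' \<in> F"
    proof -
      have "foldl \<delta> q z' = foldl \<delta> (foldl \<delta> q (take k2 z)) (drop k2 z)"
        unfolding z'_def using k(3) by simp
      also have "\<dots> = foldl \<delta> q z" by (simp flip: foldl_append)
      finally show ?thesis using less.prems(2) by simp
    qed
    ultimately show ?thesis using less.hyps by blast
  qed
qed

definition ts :: "('b \<Rightarrow> 'c list) \<Rightarrow> 'b list \<Rightarrow> 'c list" where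
  "ts \<tau> u = concat (map \<tau> u)"

lemma ts_simps[simp]: "ts \<tau> [] = []" "ts \<tau> (b # u) = \<tau> b @ ts \<tau> u" "ts \<tau> (u @ v) = ts \<tau> u @ ts \<tau> v"
  unfolding ts_def by simp_all

lemma ts_lists: "\<forall>b\<in>B. \<tau> b \<in> lists C \<Longrightarrow> u \<in> lists B \<Longrightarrow> ts \<tau> u \<in> lists C"
  by (induction u) auto

lemma ts_len: "\<forall>b\<in>B. length (\<tau> b) \<le> M \<Longrightarrow> u \<in> lists B \<Longrightarrow> length (ts \<tau> u) \<le> M * length u"
  by (induction u) auto

lemma ol_lists: "a \<in> insert None (Some ` B) \<Longrightarrow> ol a \<in> lists B"
  by auto

lemma strip_lists: "xs \<in> lists (insert None (Some ` B)) \<Longrightarrow> strip xs \<in> lists B"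
  by (induction xs) auto

lemma pa_fst: "x \<in> pair_alph B \<Longrightarrow> fst x \<in> insert None (Some`B)"
  unfolding pair_alph_def by (cases x) auto
lemma pa_snd: "x \<in> pair_alph B \<Longrightarrow> snd x \<in> insert None (Some`B)"
  unfolding pair_alph_def by (cases x) auto
lemma map_fst_pa: "z \<in> lists (pair_alph B) \<Longrightarrow> map fst z \<in> lists (insert None (Some`B))"
proof (induction z)
  case (Cons a z) then show ?case using pa_fst[of a B] by simp
qed simp
lemma map_snd_pa: "z \<in> lists (pair_alph B) \<Longrightarrow> map snd z \<in> lists (insert None (Some`B))"
proof (induction z)
  case (Cons a z) then show ?case using pa_snd[of a B] by simp
qed simp

locale gsetup =
  fixes B :: "'b set" and C :: "'c set" and S :: "('b list \<times> 'b list) set" and \<tau> :: "'b \<Rightarrow> 'c list"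
    and K :: nat and Q :: "nat set" and q0 :: nat and \<delta> :: "nat \<Rightarrow> ('b option \<times> 'b option) \<Rightarrow> nat" and F :: "nat set"
  assumes finB: "finite B" and finC: "finite C" and Ssub: "S \<subseteq> lists B \<times> lists B"
    and tauC: "\<forall>b\<in>B. \<tau> b \<in> lists C"
    and finQ: "finite Q" and q0Q: "q0 \<in> Q" and FQ: "F \<subseteq> Q" and \<delta>Q: "\<forall>q\<in>Q. \<forall>a\<in>pair_alph B. \<delta> q a \<in> Q"
    and Pdef: "(\<lambda>(u,v). padR u v) ` S = {w \<in> lists (pair_alph B). foldl \<delta> q0 w \<in> F}"
    and drift: "\<forall>(u,v)\<in>S. length (ts \<tau> u) \<le> length (ts \<tau> v) + K \<and> length (ts \<tau> v) \<le> length (ts \<tau> u) + K"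
begin

definition M :: nat where "M = Max (insert 0 ((\<lambda>b. length (\<tau> b)) ` B))"

lemma M_bound: "b \<in> B \<Longrightarrow> length (\<tau> b) \<le> M"
  unfolding M_def using finB by (auto intro: Max_ge)

definition Dr :: nat where "Dr = K + card Q * M"
definition D :: nat where "D = Dr + M"

definition U :: "(nat \<times> 'c list \<times> 'c list) set" where
  "U = Q \<times> {l. set l \<subseteq> C \<and> length l \<le> D} \<times> {l. set l \<subseteq> C \<and> length l \<le> D}"

lemma finite_U: "finite U"
  unfolding U_def using finQ finite_lists_length_le[OF finC] by simp

definition tstep :: "nat \<times> 'c list \<times> 'c list \<Rightarrow> ('b option \<times> 'b option) \<Rightarrow> nat \<times> 'c list \<times> 'c list" where
  "tstep c \<beta> = (case c of (q, px, py) \<Rightarrow> (\<delta> q \<beta>, px @ ts \<tau> (ol (fst \<beta>)), py @ ts \<tau> (ol (snd \<beta>))))"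

definition E :: "((nat \<times> 'c list \<times> 'c list) \<times> (nat \<times> 'c list \<times> 'c list)) set" where
  "E = {(c, tstep c \<beta>) | c \<beta>. \<beta> \<in> pair_alph B \<and> c \<in> U \<and> tstep c \<beta> \<in> U}"

definition rd :: "('c option \<times> 'c option) \<Rightarrow> nat \<times> 'c list \<times> 'c list \<Rightarrow> (nat \<times> 'c list \<times> 'c list) set" where
  "rd col c = (case c of (q, px, py) \<Rightarrow> {(q, px', py') | px' py'. ol (fst col) @ px' = px \<and> ol (snd col) @ py' = py})"

definition Dl :: "nat \<times> 'c list \<times> 'c list \<Rightarrow> ('c option \<times> 'c option) \<Rightarrow> (nat \<times> 'c list \<times> 'c list) set" where
  "Dl c col = {c2. \<exists>c1. (c, c1) \<in> E\<^sup>* \<and> c2 \<in> rd col c1}"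

definition FF :: "(nat \<times> 'c list \<times> 'c list) set" where
  "FF = {c. \<exists>c1. (c, c1) \<in> E\<^sup>* \<and> (\<exists>q\<in>F. c1 = (q, [], []))}"

lemma E_U: "(c, c1) \<in> E\<^sup>* \<Longrightarrow> c \<in> U \<Longrightarrow> c1 \<in> U"
  by (induction rule: rtrancl_induct) (auto simp: E_def)

lemma rd_U: "c \<in> U \<Longrightarrow> c2 \<in> rd col c \<Longrightarrow> c2 \<in> U"
  unfolding rd_def U_def by auto

lemma Dl_U: "c \<in> U \<Longrightarrow> Dl c col \<subseteq> U"
  unfolding Dl_def using E_U rd_U by blast

lemma E_inv:
  assumes "(c, c1) \<in> E\<^sup>*"
  shows "\<exists>z\<in>lists (pair_alph B). c1 = (foldl \<delta> (fst c) z, fst (snd c) @ ts \<tau> (strip (map fst z)),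
           snd (snd c) @ ts \<tau> (strip (map snd z)))"
  using assms
proof (induction rule: rtrancl_induct)
  case base
  then show ?case by (intro bexI[of _ "[]"]) (auto simp: prod_eq_iff)
next
  case (step c1 c2)
  then obtain z where z: "z \<in> lists (pair_alph B)" "c1 = (foldl \<delta> (fst c) z, fst (snd c) @ ts \<tau> (strip (map fst z)),
           snd (snd c) @ ts \<tau> (strip (map snd z)))" by blast
  from step(2) obtain \<beta> where \<beta>: "\<beta> \<in> pair_alph B" "c2 = tstep c1 \<beta>" unfolding E_def by blast
  show ?case
    by (rule bexI[of _ "z @ [\<beta>]"]) (use z \<beta> in \<open>auto simp: tstep_def\<close>)
qed

lemma sound:
  assumes "acc Dl FF (q, px, py) w"
  shows "\<exists>z\<in>lists (pair_alph B). foldl \<delta> q z \<in> F \<and> strip (map fst w) = px @ ts \<tau> (strip (map fst z))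
            \<and> strip (map snd w) = py @ ts \<tau> (strip (map snd z))"
  using assms
proof (induction w arbitrary: q px py)
  case Nil
  then obtain c1 q' where "((q, px, py), c1) \<in> E\<^sup>*" "q' \<in> F" "c1 = (q', [], [])" by (auto simp: FF_def)
  then obtain z where "z\<in>lists (pair_alph B)" "(q', [], []) = (foldl \<delta> q z, px @ ts \<tau> (strip (map fst z)),
           py @ ts \<tau> (strip (map snd z)))" using E_inv by fastforce
  then show ?case using \<open>q' \<in> F\<close> by (intro bexI[of _ z]) auto
next
  case (Cons col w)
  then obtain c2 where c2: "c2 \<in> Dl (q, px, py) col" "acc Dl FF c2 w" by auto
  then obtain c1 where c1: "((q, px, py), c1) \<in> E\<^sup>*" "c2 \<in> rd col c1" unfolding Dl_def by auto
  then obtain z1 where z1: "z1\<in>lists (pair_alph B)" "c1 = (foldl \<delta> q z1, px @ ts \<tau> (strip (map fst z1)),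
           py @ ts \<tau> (strip (map snd z1)))" using E_inv by fastforce
  then obtain px2 py2 where p2: "c2 = (foldl \<delta> q z1, px2, py2)" "ol (fst col) @ px2 = px @ ts \<tau> (strip (map fst z1))"
     "ol (snd col) @ py2 = py @ ts \<tau> (strip (map snd z1))" using c1(2) unfolding rd_def by auto
  obtain z2 where z2: "z2\<in>lists (pair_alph B)" "foldl \<delta> (foldl \<delta> q z1) z2 \<in> F"
    "strip (map fst w) = px2 @ ts \<tau> (strip (map fst z2))" "strip (map snd w) = py2 @ ts \<tau> (strip (map snd z2))"
    using Cons.IH c2(2) p2(1) by blast
  show ?case
    by (rule bexI[of _ "z1 @ z2"]) (use z1 z2 p2 in auto)
qed


lemma z_in_S: "(u, v) \<in> S \<Longrightarrow> padR u v \<in> lists (pair_alph B) \<and> foldl \<delta> q0 (padR u v) \<in> F"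
proof -
  assume "(u, v) \<in> S"
  then have "padR u v \<in> (\<lambda>(u,v). padR u v) ` S" by force
  then show ?thesis unfolding Pdef by simp
qed

lemma drift_prefix:
  assumes uv: "(u, v) \<in> S"
  shows "length (ts \<tau> (take i u)) \<le> length (ts \<tau> (take i v)) + Dr \<and> length (ts \<tau> (take i v)) \<le> length (ts \<tau> (take i u)) + Dr"
proof -
  define z where "z = padR u v"
  have zl: "z \<in> lists (pair_alph B)" and zF: "foldl \<delta> q0 z \<in> F" using z_in_S[OF uv] z_def by auto
  define s where "s = foldl \<delta> q0 (take i z)"
  have tl: "take i z \<in> lists (pair_alph B)" "drop i z \<in> lists (pair_alph B)" using zl
    by (auto dest: in_set_takeD in_set_dropD)
  have sQ: "s \<in> Q" unfolding s_def using foldl_in[OF q0Q \<delta>Q tl(1)] .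
  have "foldl \<delta> s (drop i z) \<in> F" unfolding s_def using zF by (simp flip: foldl_append)
  then obtain z' where z': "z' \<in> lists (pair_alph B)" "length z' \<le> card Q" "foldl \<delta> s z' \<in> F"
    using short_path[OF finQ sQ \<delta>Q tl(2)] by blast
  have "take i z @ z' \<in> lists (pair_alph B)" using tl z' by auto
  moreover have "foldl \<delta> q0 (take i z @ z') \<in> F" using z' unfolding s_def by simp
  ultimately have "take i z @ z' \<in> (\<lambda>(u,v). padR u v) ` S" unfolding Pdef by simp
  then obtain u' v' where uv': "(u', v') \<in> S" "padR u' v' = take i z @ z'" by auto
  define a where "a = strip (map fst z')"
  define b where "b = strip (map snd z')"
  have tz: "take i z = padR (take i u) (take i v)" unfolding z_def by (rule padR_take)
  have u': "u' = take i u @ a"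
    using arg_cong[OF uv'(2), of "\<lambda>w. strip (map fst w)"] unfolding tz a_def by simp
  have v': "v' = take i v @ b"
    using arg_cong[OF uv'(2), of "\<lambda>w. strip (map snd w)"] unfolding tz b_def by simp
  have "map fst z' \<in> lists (insert None (Some ` B))" "map snd z' \<in> lists (insert None (Some ` B))"
    by (rule map_fst_pa[OF z'(1)], rule map_snd_pa[OF z'(1)])
  then have al: "a \<in> lists B" "b \<in> lists B" unfolding a_def b_def by (auto intro!: strip_lists)
  have "length a \<le> card Q" "length b \<le> card Q"
    using strip_length[of "map fst z'"] strip_length[of "map snd z'"] z'(2) unfolding a_def b_def by auto
  moreover have Mb: "\<forall>b\<in>B. length (\<tau> b) \<le> M" using M_bound by blast
  ultimately have "length (ts \<tau> a) \<le> card Q * M" "length (ts \<tau> b) \<le> card Q * M"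
    using ts_len[OF Mb al(1)] ts_len[OF Mb al(2)]
    by (metis dual_order.trans mult.commute mult_le_mono2)+
  moreover have "length (ts \<tau> u') \<le> length (ts \<tau> v') + K" "length (ts \<tau> v') \<le> length (ts \<tau> u') + K"
    using drift uv'(1) by auto
  ultimately show ?thesis unfolding u' v' Dr_def by auto
qed

lemma E_acc: "(c, c') \<in> E \<Longrightarrow> acc Dl FF c' w \<Longrightarrow> acc Dl FF c w"
proof (cases w)
  case Nil
  assume "(c, c') \<in> E" "acc Dl FF c' w"
  then show ?thesis using Nil unfolding FF_def by (auto intro: converse_rtrancl_into_rtrancl)
next
  case (Cons col w')
  assume a: "(c, c') \<in> E" "acc Dl FF c' w"
  have "Dl c' col \<subseteq> Dl c col" unfolding Dl_def using a(1) by (auto intro: converse_rtrancl_into_rtrancl)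
  then show ?thesis using a(2) Cons by auto
qed

lemma rd_Dl: "c2 \<in> rd col c \<Longrightarrow> c2 \<in> Dl c col"
  unfolding Dl_def mem_Collect_eq by (rule exI[of _ c]) simp

end

lemma (in gsetup) E_intro: "\<beta> \<in> pair_alph B \<Longrightarrow> c \<in> U \<Longrightarrow> tstep c \<beta> \<in> U \<Longrightarrow> (c, tstep c \<beta>) \<in> E"
  unfolding E_def by blast

locale gcomp = gsetup +
  fixes u v
  assumes uvS: "(u, v) \<in> S"
begin

definition "z = padR u v"
definition "x = ts \<tau> u"
definition "y = ts \<tau> v"
definition "w = padR x y"
definition "X i = ts \<tau> (strip (map fst (take i z)))"
definition "Y i = ts \<tau> (strip (map snd (take i z)))"
definition "cfg i j = (foldl \<delta> q0 (take i z), drop j (X i), drop j (Y i))"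

lemma uvB: "u \<in> lists B" "v \<in> lists B" using uvS Ssub by auto
lemma zl: "z \<in> lists (pair_alph B)" unfolding z_def using uvB padR_lists by metis
lemma zF: "foldl \<delta> q0 z \<in> F" unfolding z_def using z_in_S[OF uvS] by simp

lemma X_take: "X i = ts \<tau> (take i u)" unfolding X_def z_def padR_take by simp
lemma Y_take: "Y i = ts \<tau> (take i v)" unfolding Y_def z_def padR_take by simp

lemma X_full: "length z \<le> i \<Longrightarrow> X i = x" unfolding X_def x_def z_def by simp
lemma Y_full: "length z \<le> i \<Longrightarrow> Y i = y" unfolding Y_def y_def z_def by simp

lemma X_pre: "x = X i @ ts \<tau> (strip (map fst (drop i z)))"
proof -
  have "x = ts \<tau> (strip (map fst (take i z @ drop i z)))" unfolding x_def z_def by simp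
  then show ?thesis unfolding X_def by (simp del: append_take_drop_id)
qed

lemma Y_pre: "y = Y i @ ts \<tau> (strip (map snd (drop i z)))"
proof -
  have "y = ts \<tau> (strip (map snd (take i z @ drop i z)))" unfolding y_def z_def by simp
  then show ?thesis unfolding Y_def by (simp del: append_take_drop_id)
qed

lemma X_len: "length (X i) \<le> length x" using X_pre[of i] by (metis le_add1 length_append)
lemma Y_len: "length (Y i) \<le> length y" using Y_pre[of i] by (metis le_add1 length_append)

lemma X_Suc: "i < length z \<Longrightarrow> X (Suc i) = X i @ ts \<tau> (ol (fst (z ! i)))"
  unfolding X_def by (simp add: take_Suc_conv_app_nth)
lemma Y_Suc: "i < length z \<Longrightarrow> Y (Suc i) = Y i @ ts \<tau> (ol (snd (z ! i)))"
  unfolding Y_def by (simp add: take_Suc_conv_app_nth)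

lemma Mb: "\<forall>b\<in>B. length (\<tau> b) \<le> M" using M_bound by blast

lemma zi: "i < length z \<Longrightarrow> z ! i \<in> pair_alph B" using zl by (simp add: in_lists_conv_set)

lemma ol_len: "a \<in> insert None (Some ` B) \<Longrightarrow> length (ts \<tau> (ol a)) \<le> M"
  using Mb by auto

lemma tX_len: "i < length z \<Longrightarrow> length (ts \<tau> (ol (fst (z ! i)))) \<le> M"
  using ol_len pa_fst zi by blast
lemma tY_len: "i < length z \<Longrightarrow> length (ts \<tau> (ol (snd (z ! i)))) \<le> M"
  using ol_len pa_snd zi by blast

lemma w_len: "length w = max (length x) (length y)" unfolding w_def by simp

lemma w_fst: "j < length w \<Longrightarrow> fst (w ! j) = (if j < length x then Some (x ! j) else None)"
proof -
  assume j: "j < length w"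
  have "fst (w ! j) = map fst w ! j" using j by simp
  also have "\<dots> = (map Some x @ replicate (length y - length x) None) ! j" unfolding w_def padR_fst ..
  finally show ?thesis using j w_len by (auto simp: nth_append)
qed

lemma w_snd: "j < length w \<Longrightarrow> snd (w ! j) = (if j < length y then Some (y ! j) else None)"
proof -
  assume j: "j < length w"
  have "snd (w ! j) = map snd w ! j" using j by simp
  also have "\<dots> = (map Some y @ replicate (length x - length y) None) ! j" unfolding w_def padR_snd ..
  finally show ?thesis using j w_len by (auto simp: nth_append)
qed

lemma rdX: "j < length w \<Longrightarrow> (j < length (X i) \<or> (X i = x \<and> length x \<le> j)) \<Longrightarrow>
   ol (fst (w ! j)) @ drop (Suc j) (X i) = drop j (X i)"
proof -
  assume j: "j < length w" and h: "j < length (X i) \<or> (X i = x \<and> length x \<le> j)"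
  show ?thesis
  proof (cases "j < length (X i)")
    case True
    then have "j < length x" using X_len le_less_trans by (metis leD leI order.strict_trans2)
    moreover have "x ! j = X i ! j" using X_pre[of i] True by (metis nth_append)
    ultimately show ?thesis using j True w_fst by (simp add: Cons_nth_drop_Suc)
  next
    case False
    then have "X i = x" "length x \<le> j" using h by auto
    then show ?thesis using j w_fst by simp
  qed
qed

lemma rdY: "j < length w \<Longrightarrow> (j < length (Y i) \<or> (Y i = y \<and> length y \<le> j)) \<Longrightarrow>
   ol (snd (w ! j)) @ drop (Suc j) (Y i) = drop j (Y i)"
proof -
  assume j: "j < length w" and h: "j < length (Y i) \<or> (Y i = y \<and> length y \<le> j)"
  show ?thesis
  proof (cases "j < length (Y i)")
    case True
    then have "j < length y" using Y_len le_less_trans by (metis leD leI order.strict_trans2)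
    moreover have "y ! j = Y i ! j" using Y_pre[of i] True by (metis nth_append)
    ultimately show ?thesis using j True w_snd by (simp add: Cons_nth_drop_Suc)
  next
    case False
    then have "Y i = y" "length y \<le> j" using h by auto
    then show ?thesis using j w_snd by simp
  qed
qed

lemma X_lists: "X i \<in> lists C"
  unfolding X_take using uvB(1) by (auto intro!: ts_lists[OF tauC] dest: in_set_takeD)
lemma Y_lists: "Y i \<in> lists C"
  unfolding Y_take using uvB(2) by (auto intro!: ts_lists[OF tauC] dest: in_set_takeD)

lemma cfg_U: "length (drop j (X i)) \<le> D \<Longrightarrow> length (drop j (Y i)) \<le> D \<Longrightarrow> cfg i j \<in> U"
proof -
  assume a: "length (drop j (X i)) \<le> D" "length (drop j (Y i)) \<le> D"
  have "take i z \<in> lists (pair_alph B)" using zl by (auto dest: in_set_takeD)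
  then have "foldl \<delta> q0 (take i z) \<in> Q" using foldl_in[OF q0Q \<delta>Q] by blast
  moreover have "set (drop j (X i)) \<subseteq> C" "set (drop j (Y i)) \<subseteq> C"
    using X_lists[of i] Y_lists[of i] by (auto dest: in_set_dropD)
  ultimately show ?thesis using a unfolding cfg_def U_def by simp
qed


lemma drXY: "length (Y i) \<le> length (X i) + Dr \<and> length (X i) \<le> length (Y i) + Dr"
  unfolding X_take Y_take using drift_prefix[OF uvS, of i] by auto

lemma main_claim:
  "i \<le> length z \<Longrightarrow> j \<le> length w \<Longrightarrow> (j \<le> length (X i) \<or> X i = x) \<Longrightarrow> (j \<le> length (Y i) \<or> Y i = y) \<Longrightarrow>
   length (drop j (X i)) \<le> D \<Longrightarrow> length (drop j (Y i)) \<le> D \<Longrightarrow> acc Dl FF (cfg i j) (drop j w)"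
proof (induction "(length z - i) + (length w - j)" arbitrary: i j rule: less_induct)
  case less
  show ?case
  proof (cases "j < length w \<and> (j < length (X i) \<or> (X i = x \<and> length x \<le> j)) \<and> (j < length (Y i) \<or> (Y i = y \<and> length y \<le> j))")
    case True
    have ih: "acc Dl FF (cfg i (Suc j)) (drop (Suc j) w)"
    proof (rule less.hyps)
      show "length z - i + (length w - Suc j) < length z - i + (length w - j)" using True by auto
      show "Suc j \<le> length (X i) \<or> X i = x" "Suc j \<le> length (Y i) \<or> Y i = y" using True by auto
      show "length (drop (Suc j) (X i)) \<le> D" "length (drop (Suc j) (Y i)) \<le> D" using less.prems by auto
    qed (use less.prems True in auto)
    have "cfg i (Suc j) \<in> rd (w ! j) (cfg i j)" unfolding rd_def cfg_def using rdX[of j i] rdY[of j i] True by auto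
    then have "cfg i (Suc j) \<in> Dl (cfg i j) (w!j)" by (rule rd_Dl)
    moreover have "drop j w = w!j # drop (Suc j) w" using True by (simp add: Cons_nth_drop_Suc)
    ultimately show ?thesis using ih by auto
  next
    case notread: False
    show ?thesis
    proof (cases "i < length z")
      case False
      then have Xi: "X i = x" "Y i = y" using X_full Y_full by auto
      then have "j = length w" using notread less.prems(2) by auto
      then have dw: "drop j w = []" "drop j x = []" "drop j y = []" using w_len by auto
      have "i = length z" using False less.prems(1) by simp
      then have "cfg i j = (foldl \<delta> q0 z, [], [])" unfolding cfg_def using Xi dw by simp
      then have "cfg i j \<in> FF" unfolding FF_def using zF by auto
      then show ?thesis using dw by simp
    next
      case True
      define tx where "tx = ts \<tau> (ol (fst (z ! i)))"
      define ty where "ty = ts \<tau> (ol (snd (z ! i)))"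
      have XS: "X (Suc i) = X i @ tx" and YS: "Y (Suc i) = Y i @ ty"
        using X_Suc[OF True] Y_Suc[OF True] unfolding tx_def ty_def by auto
      have txl: "length tx \<le> M" and tyl: "length ty \<le> M" using tX_len[OF True] tY_len[OF True] unfolding tx_def ty_def by auto
      have tx0: "X i = x \<Longrightarrow> tx = []" using X_len[of "Suc i"] XS by simp
      have ty0: "Y i = y \<Longrightarrow> ty = []" using Y_len[of "Suc i"] YS by simp
      have invS: "j \<le> length (X (Suc i)) \<or> X (Suc i) = x" "j \<le> length (Y (Suc i)) \<or> Y (Suc i) = y"
        using less.prems(3,4) XS YS tx0 ty0 by auto
      have dX: "drop j (X (Suc i)) = drop j (X i) @ tx"
        using less.prems(3) XS tx0 by auto
      have dY: "drop j (Y (Suc i)) = drop j (Y i) @ ty"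
        using less.prems(4) YS ty0 by auto
      have DM: "M \<le> D" "Dr + M \<le> D" unfolding D_def by auto
      have bnd: "length (drop j (X (Suc i))) \<le> D \<and> length (drop j (Y (Suc i))) \<le> D"
      proof (cases "j < length w")
        case jw: True
        show ?thesis
        proof (cases "j < length (X i) \<or> (X i = x \<and> length x \<le> j)")
          case rx: True
          then have ry: "\<not> (j < length (Y i) \<or> (Y i = y \<and> length y \<le> j))" using notread jw by auto
          have "Y i \<noteq> y" using ry less.prems(4) Y_len[of i] by auto
          then have jY: "j = length (Y i)" using ry less.prems(4) by auto
          have "length (drop j (Y (Suc i))) \<le> M" using dY jY tyl by simp
          moreover have "length (drop j (X (Suc i))) \<le> Dr + M" using dX jY drXY[of i] txl by simp linarith
          ultimately show ?thesis using DM by linarith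
        next
          case rx: False
          have "X i \<noteq> x" using rx less.prems(3) X_len[of i] by auto
          then have jX: "j = length (X i)" using rx less.prems(3) by auto
          have "length (drop j (X (Suc i))) \<le> M" using dX jX txl by simp
          moreover have "length (drop j (Y (Suc i))) \<le> Dr + M" using dY jX drXY[of i] tyl by simp linarith
          ultimately show ?thesis using DM by linarith
        qed
      next
        case False
        then have "length w \<le> j" by simp
        then show ?thesis using X_len[of "Suc i"] Y_len[of "Suc i"] w_len by auto
      qed
      have ih: "acc Dl FF (cfg (Suc i) j) (drop j w)"
      proof (rule less.hyps)
        show "length z - Suc i + (length w - j) < length z - i + (length w - j)" using True by auto
      qed (use less.prems True invS bnd in auto)
      have st: "cfg (Suc i) j = tstep (cfg i j) (z ! i)"
        unfolding cfg_def tstep_def using dX dY unfolding tx_def ty_def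
        by (simp add: take_Suc_conv_app_nth True)
      have "(cfg i j, tstep (cfg i j) (z ! i)) \<in> E"
        by (rule E_intro[OF zi[OF True] cfg_U[OF less.prems(5,6)]]) (use st cfg_U[of j "Suc i"] bnd in auto)
      then have "(cfg i j, cfg (Suc i) j) \<in> E" using st by simp
      then show ?thesis using E_acc ih by blast
    qed
  qed
qed

lemma complete: "acc Dl FF (q0, [], []) w"
proof -
  have "acc Dl FF (cfg 0 0) (drop 0 w)"
    by (rule main_claim) (auto simp: X_def Y_def)
  moreover have "cfg 0 0 = (q0, [], [])" unfolding cfg_def X_def Y_def by simp
  ultimately show ?thesis by simp
qed

end

lemma (in gsetup) complete':
  assumes "(u, v) \<in> S" shows "acc Dl FF (q0, [], []) (padR (ts \<tau> u) (ts \<tau> v))"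
proof -
  interpret gcomp B C S \<tau> K Q q0 \<delta> F u v by unfold_locales (rule assms)
  show ?thesis using complete unfolding w_def x_def y_def .
qed

lemma (in gsetup) q0U: "(q0, [], []) \<in> U"
  unfolding U_def using q0Q by simp

lemma G_padR:
  assumes finB: "finite B" and finC: "finite C" and Ssub: "S \<subseteq> lists B \<times> lists B"
    and tauC: "\<forall>b\<in>B. \<tau> b \<in> lists C"
    and reg: "regular (pair_alph B) ((\<lambda>(u,v). padR u v) ` S)"
    and drift: "\<forall>(u,v)\<in>S. length (ts \<tau> u) \<le> length (ts \<tau> v) + K \<and> length (ts \<tau> v) \<le> length (ts \<tau> u) + K"
  shows "regular (pair_alph C) ((\<lambda>(u,v). padR u v) ` ((\<lambda>(u,v). (ts \<tau> u, ts \<tau> v)) ` S))"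
proof -
  obtain Q q0 \<delta> F where A: "finite (pair_alph B)" "finite (Q::nat set)" "q0 \<in> Q" "F \<subseteq> Q"
    "\<forall>q\<in>Q. \<forall>a\<in>pair_alph B. \<delta> q a \<in> Q"
    "(\<lambda>(u,v). padR u v) ` S = {w \<in> lists (pair_alph B). foldl \<delta> q0 w \<in> F}" by (rule regularE[OF reg])
  interpret g: gsetup B C S \<tau> K Q q0 \<delta> F
    by unfold_locales (use finB finC Ssub tauC A drift in auto)
  define W where "W = {w \<in> lists (pair_alph C). \<exists>q\<in>{(q0, [], [])}. acc g.Dl g.FF q w}"
  have rW: "regular (pair_alph C) W" unfolding W_def
  proof (rule nfa_regular[where U=g.U])
    show "finite (pair_alph C)" using finC by (rule finite_pair_alph)
    show "finite g.U" by (rule g.finite_U)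
    show "{(q0, [], [])} \<subseteq> g.U" using g.q0U by simp
    show "\<forall>q\<in>g.U. \<forall>a\<in>pair_alph C. g.Dl q a \<subseteq> g.U" using g.Dl_U by blast
  qed
  have rS: "regular (pair_alph C) ((\<lambda>(x,y). padR x y) ` (lists C \<times> lists C))"
    by (rule regular_shape[OF finC])
  have eq: "(\<lambda>(u,v). padR u v) ` ((\<lambda>(u,v). (ts \<tau> u, ts \<tau> v)) ` S) = W \<inter> (\<lambda>(x,y). padR x y) ` (lists C \<times> lists C)"
  proof (intro equalityI subsetI)
    fix w assume "w \<in> (\<lambda>(u,v). padR u v) ` ((\<lambda>(u,v). (ts \<tau> u, ts \<tau> v)) ` S)"
    then obtain u v where uv: "(u, v) \<in> S" "w = padR (ts \<tau> u) (ts \<tau> v)" by auto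
    have "u \<in> lists B" "v \<in> lists B" using uv(1) Ssub by auto
    then have l: "ts \<tau> u \<in> lists C" "ts \<tau> v \<in> lists C" using ts_lists[OF tauC] by blast+
    then have "w \<in> lists (pair_alph C)" using uv(2) padR_lists by metis
    moreover have "acc g.Dl g.FF (q0, [], []) w" using g.complete'[OF uv(1)] uv(2) by simp
    moreover have "w \<in> (\<lambda>(x,y). padR x y) ` (lists C \<times> lists C)" using l uv(2) by auto
    ultimately show "w \<in> W \<inter> (\<lambda>(x,y). padR x y) ` (lists C \<times> lists C)" unfolding W_def by auto
  next
    fix w assume "w \<in> W \<inter> (\<lambda>(x,y). padR x y) ` (lists C \<times> lists C)"
    then obtain x y where w: "w = padR x y" "acc g.Dl g.FF (q0, [], []) w" unfolding W_def by auto
    obtain z where z: "z\<in>lists (pair_alph B)" "foldl \<delta> q0 z \<in> F"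
      "strip (map fst w) = [] @ ts \<tau> (strip (map fst z))" "strip (map snd w) = [] @ ts \<tau> (strip (map snd z))"
      using g.sound[OF w(2)] by blast
    have "z \<in> (\<lambda>(u,v). padR u v) ` S" unfolding A(6) using z by simp
    then obtain u v where uv: "(u, v) \<in> S" "z = padR u v" by auto
    have "x = ts \<tau> u" "y = ts \<tau> v" using z(3,4) uv(2) w(1) by auto
    then show "w \<in> (\<lambda>(u,v). padR u v) ` ((\<lambda>(u,v). (ts \<tau> u, ts \<tau> v)) ` S)" using w(1) uv(1) by force
  qed
  show ?thesis unfolding eq by (rule regular_Int[OF rW rS])
qed

lemma ts_rev: "ts (\<lambda>b. rev (\<tau> b)) (rev u) = rev (ts \<tau> u)"
  by (induction u) auto

lemma rev_padL: "rev (padL u v) = padR (rev u) (rev v)"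
  by (simp add: padL_rev)

lemma G_padL:
  assumes finB: "finite B" and finC: "finite C" and Ssub: "S \<subseteq> lists B \<times> lists B"
    and tauC: "\<forall>b\<in>B. \<tau> b \<in> lists C"
    and reg: "regular (pair_alph B) ((\<lambda>(u,v). padL u v) ` S)"
    and drift: "\<forall>(u,v)\<in>S. length (ts \<tau> u) \<le> length (ts \<tau> v) + K \<and> length (ts \<tau> v) \<le> length (ts \<tau> u) + K"
  shows "regular (pair_alph C) ((\<lambda>(u,v). padL u v) ` ((\<lambda>(u,v). (ts \<tau> u, ts \<tau> v)) ` S))"
proof -
  define S' where "S' = (\<lambda>(u,v). (rev u, rev v)) ` S"
  define \<tau>' where "\<tau>' = (\<lambda>b. rev (\<tau> b))"
  have e1: "(\<lambda>(u,v). padR u v) ` S' = rev ` ((\<lambda>(u,v). padL u v) ` S)"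
    unfolding S'_def image_image by (simp add: rev_padL case_prod_beta)
  have r1: "regular (pair_alph B) ((\<lambda>(u,v). padR u v) ` S')" unfolding e1 by (rule regular_rev[OF reg])
  have S'sub: "S' \<subseteq> lists B \<times> lists B" unfolding S'_def using Ssub by auto
  have tauC': "\<forall>b\<in>B. \<tau>' b \<in> lists C" using tauC unfolding \<tau>'_def by auto
  have drift': "\<forall>(u,v)\<in>S'. length (ts \<tau>' u) \<le> length (ts \<tau>' v) + K \<and> length (ts \<tau>' v) \<le> length (ts \<tau>' u) + K"
  proof
    fix p assume "p \<in> S'"
    then obtain u v where "(u,v) \<in> S" "p = (rev u, rev v)" unfolding S'_def by auto
    then show "case p of (u, v) \<Rightarrow> length (ts \<tau>' u) \<le> length (ts \<tau>' v) + K \<and> length (ts \<tau>' v) \<le> length (ts \<tau>' u) + K"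
      using drift unfolding \<tau>'_def by (auto simp: ts_rev)
  qed
  have r2: "regular (pair_alph C) ((\<lambda>(u,v). padR u v) ` ((\<lambda>(u,v). (ts \<tau>' u, ts \<tau>' v)) ` S'))"
    by (rule G_padR[OF finB finC S'sub tauC' r1 drift'])
  have e2: "rev ` ((\<lambda>(u,v). padR u v) ` ((\<lambda>(u,v). (ts \<tau>' u, ts \<tau>' v)) ` S')) =
            (\<lambda>(u,v). padL u v) ` ((\<lambda>(u,v). (ts \<tau> u, ts \<tau> v)) ` S)"
    unfolding S'_def image_image \<tau>'_def by (simp add: ts_rev padL_rev case_prod_beta)
  show ?thesis using regular_rev[OF r2] unfolding e2 .
qed


lemma zip_rep_padR:
  assumes "length x \<le> length y" "length y \<le> length z"
  shows "zip (map Some x @ replicate (length z - length x) None) (map Some y @ replicate (length z - length y) None)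
    = padR x y @ replicate (length z - length y) (None, None)"
proof -
  have "map Some x @ replicate (length z - length x) None =
        (map Some x @ replicate (length y - length x) None) @ replicate (length z - length y) None"
    using assms by (simp add: replicate_add[symmetric])
  moreover have h: "length (map Some x @ replicate (length y - length x) None) = length (map Some y)" using assms by simp
  ultimately show ?thesis unfolding padR_def
    using zip_append[OF h, of "replicate (length z - length y) None" "replicate (length z - length y) None"] assms
    by (simp add: zip_replicate)
qed

lemma comp_acc:
  "acc (\<lambda>(p,q) (a,c). {(\<delta>1 p (a,b), \<delta>2 q (b,c)) | b. b \<in> A}) (F1 \<times> F2) (p, q) w \<longleftrightarrow>
   (\<exists>bs. length bs = length w \<and> bs \<in> lists A \<and> foldl \<delta>1 p (zip (map fst w) bs) \<in> F1 \<and>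
      foldl \<delta>2 q (zip bs (map snd w)) \<in> F2)"
proof (induction w arbitrary: p q)
  case Nil then show ?case by auto
next
  case (Cons ac w)
  obtain a c where ac: "ac = (a, c)" by force
  show ?case
  proof
    assume "acc (\<lambda>(p,q) (a,c). {(\<delta>1 p (a,b), \<delta>2 q (b,c)) | b. b \<in> A}) (F1 \<times> F2) (p, q) (ac # w)"
    then obtain b where b: "b \<in> A" "acc (\<lambda>(p,q) (a,c). {(\<delta>1 p (a,b), \<delta>2 q (b,c)) | b. b \<in> A}) (F1 \<times> F2) (\<delta>1 p (a,b), \<delta>2 q (b,c)) w"
      using ac by auto
    then obtain bs where "length bs = length w" "bs \<in> lists A" "foldl \<delta>1 (\<delta>1 p (a,b)) (zip (map fst w) bs) \<in> F1"
      "foldl \<delta>2 (\<delta>2 q (b,c)) (zip bs (map snd w)) \<in> F2" using Cons.IH by blast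
    then show "\<exists>bs. length bs = length (ac # w) \<and> bs \<in> lists A \<and> foldl \<delta>1 p (zip (map fst (ac # w)) bs) \<in> F1 \<and>
      foldl \<delta>2 q (zip bs (map snd (ac # w))) \<in> F2" using ac b(1) by (intro exI[of _ "b # bs"]) auto
  next
    assume "\<exists>bs. length bs = length (ac # w) \<and> bs \<in> lists A \<and> foldl \<delta>1 p (zip (map fst (ac # w)) bs) \<in> F1 \<and>
      foldl \<delta>2 q (zip bs (map snd (ac # w))) \<in> F2"
    then obtain bs where bs: "length bs = length (ac # w)" "bs \<in> lists A" "foldl \<delta>1 p (zip (map fst (ac # w)) bs) \<in> F1"
      "foldl \<delta>2 q (zip bs (map snd (ac # w))) \<in> F2" by blast
    then obtain b bs' where bb: "bs = b # bs'" by (cases bs) auto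
    have "length bs' = length w \<and> bs' \<in> lists A \<and> foldl \<delta>1 (\<delta>1 p (a,b)) (zip (map fst w) bs') \<in> F1 \<and>
      foldl \<delta>2 (\<delta>2 q (b,c)) (zip bs' (map snd w)) \<in> F2" using bs bb ac by auto
    then have "acc (\<lambda>(p,q) (a,c). {(\<delta>1 p (a,b), \<delta>2 q (b,c)) | b. b \<in> A}) (F1 \<times> F2) (\<delta>1 p (a,b), \<delta>2 q (b,c)) w"
      using Cons.IH by blast
    then show "acc (\<lambda>(p,q) (a,c). {(\<delta>1 p (a,b), \<delta>2 q (b,c)) | b. b \<in> A}) (F1 \<times> F2) (p, q) (ac # w)"
      using ac bs(2) bb by auto
  qed
qed

lemma strip_rep_none[simp]: "strip (map fst (replicate k (None, None))) = []" "strip (map snd (replicate k (None, None))) = []"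
  by (induction k) auto

lemma comp_padR:
  assumes finC: "finite C"
    and reg1: "regular (pair_alph C) ((\<lambda>(x,y). padR x y) ` R1)"
    and reg2: "regular (pair_alph C) ((\<lambda>(x,y). padR x y) ` R2)"
    and mono1: "\<forall>(x,y)\<in>R1. length x \<le> length y" and mono2: "\<forall>(x,y)\<in>R2. length x \<le> length y"
  shows "regular (pair_alph C) ((\<lambda>(x,y). padR x y) ` (R1 O R2))"
proof -
  have nn: "(None, None) \<in> pair_alph C" unfolding pair_alph_def by simp
  define P1 where "P1 = {w @ replicate k (None, None) | w k. w \<in> (\<lambda>(x,y). padR x y) ` R1}"
  have rP1: "regular (pair_alph C) P1" unfolding P1_def by (rule regular_trail[OF reg1 nn])
  obtain Q1 q1 \<delta>1 F1 where A: "finite (pair_alph C)" "finite (Q1::nat set)" "q1 \<in> Q1" "F1 \<subseteq> Q1"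
    "\<forall>q\<in>Q1. \<forall>a\<in>pair_alph C. \<delta>1 q a \<in> Q1"
    "P1 = {w \<in> lists (pair_alph C). foldl \<delta>1 q1 w \<in> F1}" by (rule regularE[OF rP1])
  obtain Q2 q2 \<delta>2 F2 where B: "finite (pair_alph C)" "finite (Q2::nat set)" "q2 \<in> Q2" "F2 \<subseteq> Q2"
    "\<forall>q\<in>Q2. \<forall>a\<in>pair_alph C. \<delta>2 q a \<in> Q2"
    "(\<lambda>(x,y). padR x y) ` R2 = {w \<in> lists (pair_alph C). foldl \<delta>2 q2 w \<in> F2}" by (rule regularE[OF reg2])
  define AC where "AC = insert None (Some ` C)"
  define \<Delta> where "\<Delta> = (\<lambda>(p,q) (a,c). {(\<delta>1 p (a,b), \<delta>2 q (b,c)) | b. b \<in> AC})"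
  define W where "W = {w \<in> lists (pair_alph C). \<exists>s\<in>{(q1,q2)}. acc \<Delta> (F1 \<times> F2) s w}"
  have rW: "regular (pair_alph C) W" unfolding W_def
  proof (rule nfa_regular[where U="Q1 \<times> Q2"])
    show "\<forall>s\<in>Q1 \<times> Q2. \<forall>a\<in>pair_alph C. \<Delta> s a \<subseteq> Q1 \<times> Q2"
    proof (intro ballI subsetI)
      fix s a t assume h: "s \<in> Q1 \<times> Q2" "a \<in> pair_alph C" "t \<in> \<Delta> s a"
      obtain p q where s: "s = (p, q)" by force
      obtain \<alpha> \<gamma> where a: "a = (\<alpha>, \<gamma>)" by force
      obtain b where b: "b \<in> AC" "t = (\<delta>1 p (\<alpha>, b), \<delta>2 q (b, \<gamma>))" using h(3) unfolding \<Delta>_def s a by auto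
      have "(\<alpha>, b) \<in> pair_alph C" "(b, \<gamma>) \<in> pair_alph C" using h(2) b(1) unfolding a AC_def pair_alph_def by auto
      then show "t \<in> Q1 \<times> Q2" using A(5) B(5) h(1) b(2) s by auto
    qed
  qed (use A B in auto)
  have rS: "regular (pair_alph C) ((\<lambda>(x,y). padR x y) ` (lists C \<times> lists C))"
    by (rule regular_shape[OF finC])
  have R1l: "R1 \<subseteq> lists C \<times> lists C"
  proof
    fix p assume "p \<in> R1"
    obtain a b where ab: "p = (a, b)" by force
    have "padR a b \<in> lists (pair_alph C)" using regular_subset[OF reg1] \<open>p \<in> R1\<close> ab by auto
    then show "p \<in> lists C \<times> lists C" using padR_lists[of a b C] ab by simp
  qed
  have R2l: "R2 \<subseteq> lists C \<times> lists C"
  proof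
    fix p assume "p \<in> R2"
    obtain a b where ab: "p = (a, b)" by force
    have "padR a b \<in> lists (pair_alph C)" using regular_subset[OF reg2] \<open>p \<in> R2\<close> ab by auto
    then show "p \<in> lists C \<times> lists C" using padR_lists[of a b C] ab by simp
  qed
  have eq: "(\<lambda>(x,y). padR x y) ` (R1 O R2) = W \<inter> (\<lambda>(x,y). padR x y) ` (lists C \<times> lists C)"
  proof (intro equalityI subsetI)
    fix w assume "w \<in> (\<lambda>(x,y). padR x y) ` (R1 O R2)"
    then obtain x y z where xyz: "(x, y) \<in> R1" "(y, z) \<in> R2" "w = padR x z" by auto
    have l: "x \<in> lists C" "y \<in> lists C" "z \<in> lists C" using xyz R1l R2l by auto
    have le: "length x \<le> length y" "length y \<le> length z" using xyz mono1 mono2 by auto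
    define bs where "bs = map Some y @ replicate (length z - length y) None"
    have z1: "zip (map fst w) bs = padR x y @ replicate (length z - length y) (None, None)"
      unfolding bs_def xyz(3) padR_fst using zip_rep_padR[OF le] le by simp
    have z2: "zip bs (map snd w) = padR y z"
      unfolding bs_def xyz(3) padR_snd using le by (simp add: padR_def)
    have "zip (map fst w) bs \<in> P1" unfolding z1 P1_def using xyz(1) by blast
    then have f1: "foldl \<delta>1 q1 (zip (map fst w) bs) \<in> F1" unfolding A(6) by simp
    have "zip bs (map snd w) \<in> (\<lambda>(x,y). padR x y) ` R2" unfolding z2 using xyz(2) by force
    then have f2: "foldl \<delta>2 q2 (zip bs (map snd w)) \<in> F2" unfolding B(6) by simp
    have bsl: "bs \<in> lists AC" unfolding bs_def AC_def using l by auto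
    have "length bs = length w" unfolding bs_def xyz(3) using le by simp
    then have "acc \<Delta> (F1 \<times> F2) (q1, q2) w" unfolding \<Delta>_def comp_acc using bsl f1 f2 by blast
    moreover have "w \<in> lists (pair_alph C)" using l xyz(3) padR_lists by metis
    moreover have "w \<in> (\<lambda>(x,y). padR x y) ` (lists C \<times> lists C)" using l xyz(3) by auto
    ultimately show "w \<in> W \<inter> (\<lambda>(x,y). padR x y) ` (lists C \<times> lists C)" unfolding W_def by auto
  next
    fix w assume "w \<in> W \<inter> (\<lambda>(x,y). padR x y) ` (lists C \<times> lists C)"
    then obtain x z where w: "w = padR x z" "w \<in> lists (pair_alph C)" "acc \<Delta> (F1 \<times> F2) (q1, q2) w"
      unfolding W_def by auto
    then obtain bs where bs: "length bs = length w" "bs \<in> lists AC" "foldl \<delta>1 q1 (zip (map fst w) bs) \<in> F1"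
      "foldl \<delta>2 q2 (zip bs (map snd w)) \<in> F2" unfolding \<Delta>_def comp_acc by blast
    have "map fst w \<in> lists AC" "map snd w \<in> lists AC" using map_fst_pa[OF w(2)] map_snd_pa[OF w(2)] unfolding AC_def by auto
    then have zl: "zip (map fst w) bs \<in> lists (pair_alph C)" "zip bs (map snd w) \<in> lists (pair_alph C)"
      using bs(2) unfolding pair_alph_def AC_def by (auto dest: set_zip_leftD set_zip_rightD)
    have "zip (map fst w) bs \<in> P1" unfolding A(6) using zl bs by simp
    then obtain x' y k where p1: "(x', y) \<in> R1" "zip (map fst w) bs = padR x' y @ replicate k (None, None)"
      unfolding P1_def by auto
    have "zip bs (map snd w) \<in> (\<lambda>(x,y). padR x y) ` R2" unfolding B(6) using zl bs by simp
    then obtain y' z' where p2: "(y', z') \<in> R2" "zip bs (map snd w) = padR y' z'" by auto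
    have "x' = strip (map fst (zip (map fst w) bs))" using p1(2) by simp
    also have "\<dots> = x" using bs(1) w(1) by simp
    finally have xx: "x' = x" .
    have "y = strip (map snd (zip (map fst w) bs))" using p1(2) by simp
    also have "\<dots> = strip bs" using bs(1) by simp
    also have "\<dots> = strip (map fst (zip bs (map snd w)))" using bs(1) by simp
    also have "\<dots> = y'" using p2(2) by simp
    finally have yy: "y = y'" .
    have "z' = strip (map snd (zip bs (map snd w)))" using p2(2) by simp
    also have "\<dots> = z" using bs(1) w(1) by simp
    finally have zz: "z' = z" .
    show "w \<in> (\<lambda>(x,y). padR x y) ` (R1 O R2)" using p1(1) p2(1) xx yy zz w(1) by force
  qed
  show ?thesis unfolding eq by (rule regular_Int[OF rW rS])
qed


definition rvr :: "('a list \<times> 'a list) set \<Rightarrow> ('a list \<times> 'a list) set" where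
  "rvr R = (\<lambda>(x,y). (rev x, rev y)) ` R"

lemma rvr_padR: "(\<lambda>(x,y). padR x y) ` rvr R = rev ` ((\<lambda>(x,y). padL x y) ` R)"
  unfolding rvr_def image_image by (simp add: rev_padL case_prod_beta)

lemma rvr_padL: "rev ` ((\<lambda>(x,y). padR x y) ` rvr R) = (\<lambda>(x,y). padL x y) ` R"
  unfolding rvr_def image_image by (simp add: padL_rev case_prod_beta)

lemma rvr_O: "rvr (R1 O R2) = rvr R1 O rvr R2"
proof (intro equalityI subsetI)
  fix p assume "p \<in> rvr (R1 O R2)"
  then obtain x y z where "(x,y) \<in> R1" "(y,z) \<in> R2" "p = (rev x, rev z)" unfolding rvr_def by auto
  then show "p \<in> rvr R1 O rvr R2" unfolding rvr_def by (auto intro!: relcompI[of _ "rev y"])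
next
  fix p assume "p \<in> rvr R1 O rvr R2"
  then obtain x y y' z where "(x,y) \<in> R1" "(y',z) \<in> R2" "rev y = rev y'" "p = (rev x, rev z)" unfolding rvr_def by fastforce
  then show "p \<in> rvr (R1 O R2)" unfolding rvr_def by auto
qed

lemma rvr_mono: "\<forall>(x,y)\<in>R. length x \<le> length y \<Longrightarrow> \<forall>(x,y)\<in>rvr R. length x \<le> length y"
  unfolding rvr_def by auto

lemma comp_padL:
  assumes finC: "finite C"
    and reg1: "regular (pair_alph C) ((\<lambda>(x,y). padL x y) ` R1)"
    and reg2: "regular (pair_alph C) ((\<lambda>(x,y). padL x y) ` R2)"
    and mono1: "\<forall>(x,y)\<in>R1. length x \<le> length y" and mono2: "\<forall>(x,y)\<in>R2. length x \<le> length y"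
  shows "regular (pair_alph C) ((\<lambda>(x,y). padL x y) ` (R1 O R2))"
proof -
  have "regular (pair_alph C) ((\<lambda>(x,y). padR x y) ` (rvr R1 O rvr R2))"
    by (rule comp_padR[OF finC _ _ rvr_mono[OF mono1] rvr_mono[OF mono2]])
       (simp_all only: rvr_padR regular_rev[OF reg1] regular_rev[OF reg2])
  then have "regular (pair_alph C) (rev ` ((\<lambda>(x,y). padR x y) ` rvr (R1 O R2)))"
    unfolding rvr_O by (rule regular_rev)
  then show ?thesis unfolding rvr_padL .
qed

lemma eval_Nil[simp]: "eval \<phi> [] = 1" unfolding eval_def by simp
lemma eval_Cons[simp]: "eval \<phi> (c # w) = \<phi> c * eval \<phi> w" unfolding eval_def by simp
lemma eval_append[simp]: "eval \<phi> (u @ v) = eval \<phi> u * eval \<phi> v" unfolding eval_def by (simp add: mult.assoc)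
lemma eval_single[simp]: "eval \<phi> [c] = \<phi> c" unfolding eval_def by simp

lemma rstep_len: "(\<forall>(u, v) \<in> R. length u = length v) \<Longrightarrow> (s, t) \<in> rstep R \<Longrightarrow> length s = length t"
  unfolding rstep_def by auto

lemma rcong_len:
  assumes "\<forall>(u, v) \<in> R. length u = length v" "(s, t) \<in> (rstep R \<union> (rstep R)\<inverse>)\<^sup>*"
  shows "length s = length t"
  using assms(2)
proof (induction rule: rtrancl_induct)
  case (step y z)
  then show ?case using rstep_len[OF assms(1)] by auto
qed simp

locale homog =
  fixes A :: "nat set" and \<phi>A :: "nat \<Rightarrow> 'm::monoid_mult" and R
  assumes finA: "finite A" and pres: "is_presentation \<phi>A A R" and hom: "\<forall>(u, v) \<in> R. length u = length v"
begin

lemma surjA: "\<exists>w\<in>lists A. eval \<phi>A w = m"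
  using pres unfolding is_presentation_def by (metis UNIV_I image_iff)

lemma len_eq: "u \<in> lists A \<Longrightarrow> v \<in> lists A \<Longrightarrow> eval \<phi>A u = eval \<phi>A v \<Longrightarrow> length u = length v"
  using pres rcong_len[OF hom] unfolding is_presentation_def rcong_def by auto

definition lam :: "'m \<Rightarrow> nat" where
  "lam m = length (SOME w. w \<in> lists A \<and> eval \<phi>A w = m)"

lemma lam_eval: "w \<in> lists A \<Longrightarrow> lam (eval \<phi>A w) = length w"
proof -
  assume w: "w \<in> lists A"
  have "\<exists>w'. w' \<in> lists A \<and> eval \<phi>A w' = eval \<phi>A w" using w by blast
  then have "(SOME w'. w' \<in> lists A \<and> eval \<phi>A w' = eval \<phi>A w) \<in> lists A \<and>
     eval \<phi>A (SOME w'. w' \<in> lists A \<and> eval \<phi>A w' = eval \<phi>A w) = eval \<phi>A w" by (rule someI_ex)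
  then show ?thesis unfolding lam_def using len_eq w by blast
qed

lemma lam_mult: "lam (a * b) = lam a + lam b"
proof -
  obtain u v where "u \<in> lists A" "eval \<phi>A u = a" "v \<in> lists A" "eval \<phi>A v = b" using surjA by metis
  then show ?thesis using lam_eval[of "u @ v"] lam_eval[of u] lam_eval[of v] by auto
qed

lemma lam_one: "lam 1 = 0"
  using lam_eval[of "[]"] by simp

lemma lam_zero: "lam m = 0 \<Longrightarrow> m = 1"
proof -
  assume "lam m = 0"
  obtain u where "u \<in> lists A" "eval \<phi>A u = m" using surjA by metis
  then have "length u = 0" using lam_eval \<open>lam m = 0\<close> by metis
  then show "m = 1" using \<open>eval \<phi>A u = m\<close> by simp
qed

lemma lam_evalg: "lam (eval \<phi> w) = sum_list (map (\<lambda>c. lam (\<phi> c)) w)"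
  by (induction w) (auto simp: lam_one lam_mult)

lemma atom_letter:
  "lam (eval \<phi> w) = 1 \<Longrightarrow> \<exists>c\<in>set w. \<phi> c = eval \<phi> w \<and> lam (\<phi> c) = 1"
proof (induction w)
  case Nil then show ?case by (simp add: lam_one)
next
  case (Cons c w)
  have s: "lam (\<phi> c) + lam (eval \<phi> w) = 1" using Cons.prems by (simp add: lam_mult)
  show ?case
  proof (cases "lam (\<phi> c) = 1")
    case True
    then have "eval \<phi> w = 1" using s lam_zero by auto
    then show ?thesis using True by auto
  next
    case False
    then have "\<phi> c = 1" "lam (eval \<phi> w) = 1" using s lam_zero by auto
    then show ?thesis using Cons.IH by auto
  qed
qed

lemma atom_gen:
  assumes gen: "\<forall>m. \<exists>w \<in> lists G. eval \<phi> w = m" and "lam m = 1"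
  shows "\<exists>c\<in>G. \<phi> c = m \<and> lam (\<phi> c) = 1"
proof -
  obtain w where "w \<in> lists G" "eval \<phi> w = m" using gen by blast
  then show ?thesis using atom_letter[of \<phi> w] assms(2) by auto
qed

lemma atom_words:
  assumes gen: "\<forall>m. \<exists>w \<in> lists G. eval \<phi> w = m"
  shows "\<exists>x \<in> lists {c\<in>G. lam (\<phi> c) = 1}. eval \<phi> x = m"
proof -
  obtain a where a: "a \<in> lists A" "eval \<phi>A a = m" using surjA by metis
  have "\<forall>b\<in>set a. \<exists>c\<in>G. \<phi> c = \<phi>A b \<and> lam (\<phi> c) = 1"
  proof
    fix b assume "b \<in> set a"
    then have "lam (\<phi>A b) = 1" using lam_eval[of "[b]"] a(1) by auto
    then show "\<exists>c\<in>G. \<phi> c = \<phi>A b \<and> lam (\<phi> c) = 1" using atom_gen[OF gen] by blast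
  qed
  then have "\<exists>x. x \<in> lists {c\<in>G. lam (\<phi> c) = 1} \<and> eval \<phi> x = eval \<phi>A a"
  proof (induction a)
    case Nil then show ?case by (intro exI[of _ "[]"]) auto
  next
    case (Cons b a)
    from Cons.prems have "\<forall>b\<in>set a. \<exists>c\<in>G. \<phi> c = \<phi>A b \<and> lam (\<phi> c) = 1" by simp
    then obtain x where x: "x \<in> lists {c\<in>G. lam (\<phi> c) = 1}" "eval \<phi> x = eval \<phi>A a" using Cons.IH by blast
    from Cons.prems obtain c where c: "c \<in> G" "\<phi> c = \<phi>A b" "lam (\<phi> c) = 1" by auto
    show ?case using x c by (intro exI[of _ "c # x"]) auto
  qed
  then show ?thesis using a(2) by auto
qed

lemma atom_len: "x \<in> lists {c\<in>G. lam (\<phi> c) = 1} \<Longrightarrow> lam (eval \<phi> x) = length x"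
  by (induction x) (auto simp: lam_one lam_mult)

end

definition relD :: "bool \<Rightarrow> ('x \<Rightarrow> 'm::monoid_mult) \<Rightarrow> 'x list set \<Rightarrow> 'x list \<Rightarrow> ('x list \<times> 'x list) set" where
  "relD d \<phi> L a = (if d then right_rel \<phi> L a else left_rel \<phi> L a)"

definition padD :: "bool \<Rightarrow> 'x list \<Rightarrow> 'x list \<Rightarrow> ('x option \<times> 'x option) list" where
  "padD s u v = (if s then padR u v else padL u v)"

lemma G_padD:
  assumes "finite B" "finite C" "S \<subseteq> lists B \<times> lists B" "\<forall>b\<in>B. \<tau> b \<in> lists C"
    "regular (pair_alph B) ((\<lambda>(u,v). padD s u v) ` S)"
    "\<forall>(u,v)\<in>S. length (ts \<tau> u) \<le> length (ts \<tau> v) + K \<and> length (ts \<tau> v) \<le> length (ts \<tau> u) + K"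
  shows "regular (pair_alph C) ((\<lambda>(u,v). padD s u v) ` ((\<lambda>(u,v). (ts \<tau> u, ts \<tau> v)) ` S))"
  using assms G_padR[of B C S \<tau> K] G_padL[of B C S \<tau> K] unfolding padD_def by (cases s) auto

lemma comp_padD:
  assumes "finite C"
    "regular (pair_alph C) ((\<lambda>(x,y). padD s x y) ` R1)"
    "regular (pair_alph C) ((\<lambda>(x,y). padD s x y) ` R2)"
    "\<forall>(x,y)\<in>R1. length x \<le> length y" "\<forall>(x,y)\<in>R2. length x \<le> length y"
  shows "regular (pair_alph C) ((\<lambda>(x,y). padD s x y) ` (R1 O R2))"
  using assms comp_padR[of C R1 R2] comp_padL[of C R1 R2] unfolding padD_def by (cases s) auto

lemma relD_sub: "relD d \<psi> L a \<subseteq> L \<times> L"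
  unfolding relD_def right_rel_def left_rel_def by auto

lemma relD_mem: "(u, v) \<in> relD d \<psi> L a \<longleftrightarrow> u \<in> L \<and> v \<in> L \<and>
   (if d then eval \<psi> u * eval \<psi> a = eval \<psi> v else eval \<psi> a * eval \<psi> u = eval \<psi> v)"
  unfolding relD_def right_rel_def left_rel_def by auto

locale transfer = homog A \<phi>A R for A :: "nat set" and \<phi>A :: "nat \<Rightarrow> 'm::monoid_mult" and R +
  fixes \<phi> :: "'c \<Rightarrow> 'm" and C :: "'c set" and B :: "nat set" and \<psi> :: "nat \<Rightarrow> 'm" and L :: "nat list set"
  assumes finC: "finite C" and gen: "\<forall>m. \<exists>w \<in> lists C. eval \<phi> w = m"
    and finB: "finite B" and LB: "L \<subseteq> lists B" and surjL: "eval \<psi> ` L = UNIV"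
begin

definition atw :: "'m \<Rightarrow> 'c list" where
  "atw m = (SOME x. x \<in> lists {c\<in>C. lam (\<phi> c) = 1} \<and> eval \<phi> x = m)"

lemma atw: "atw m \<in> lists {c\<in>C. lam (\<phi> c) = 1} \<and> eval \<phi> (atw m) = m"
  unfolding atw_def using atom_words[OF gen, of m] by (metis (mono_tags, lifting) someI_ex)

definition \<sigma> :: "nat \<Rightarrow> 'c list" where "\<sigma> b = atw (\<psi> b)"

definition K :: "'c list set" where "K = ts \<sigma> ` L"

lemma \<sigma>C: "\<forall>b\<in>B. \<sigma> b \<in> lists C" unfolding \<sigma>_def using atw by auto

lemma eval_ts: "eval \<phi> (ts \<sigma> u) = eval \<psi> u"
  by (induction u) (auto simp: \<sigma>_def atw)

lemma len_ts: "length (ts \<sigma> u) = lam (eval \<psi> u)"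
proof (induction u)
  case Nil then show ?case by (simp add: lam_one)
next
  case (Cons b u)
  have "length (\<sigma> b) = lam (\<psi> b)" unfolding \<sigma>_def using atom_len[of "atw (\<psi> b)" C \<phi>] atw by metis
  then show ?case using Cons by (simp add: lam_mult)
qed

lemma K_len: "x \<in> K \<Longrightarrow> length x = lam (eval \<phi> x)"
  unfolding K_def using len_ts eval_ts by auto

lemma K_lists: "K \<subseteq> lists C"
proof
  fix x assume "x \<in> K"
  then obtain u where "u \<in> L" "x = ts \<sigma> u" unfolding K_def by auto
  then show "x \<in> lists C" using LB ts_lists[OF \<sigma>C] by blast
qed

lemma K_surj: "eval \<phi> ` K = UNIV"
  unfolding K_def image_image eval_ts using surjL by simp

lemma genB: "\<forall>m. \<exists>w \<in> lists B. eval \<psi> w = m"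
  using surjL LB by (metis UNIV_I image_iff subsetD)

lemma rel_img:
  assumes "eval \<phi> a = eval \<psi> a'"
  shows "relD d \<phi> K a = (\<lambda>(u,v). (ts \<sigma> u, ts \<sigma> v)) ` relD d \<psi> L a'"
proof (intro equalityI subsetI)
  fix p assume h: "p \<in> relD d \<phi> K a"
  obtain x y where p: "p = (x, y)" by force
  have "(x, y) \<in> relD d \<phi> K a" using h p by simp
  then have "x \<in> K \<and> y \<in> K \<and> (if d then eval \<phi> x * eval \<phi> a = eval \<phi> y else eval \<phi> a * eval \<phi> x = eval \<phi> y)"
    by (rule iffD1[OF relD_mem])
  then have xy: "p = (x, y)" "x \<in> K" "y \<in> K"
    "if d then eval \<phi> x * eval \<phi> a = eval \<phi> y else eval \<phi> a * eval \<phi> x = eval \<phi> y" using p by auto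
  then obtain u v where uv: "u \<in> L" "v \<in> L" "x = ts \<sigma> u" "y = ts \<sigma> v" unfolding K_def by auto
  have e: "eval \<phi> x = eval \<psi> u" "eval \<phi> y = eval \<psi> v" using uv eval_ts by auto
  have "if d then eval \<psi> u * eval \<psi> a' = eval \<psi> v else eval \<psi> a' * eval \<psi> u = eval \<psi> v"
    using xy(4) assms e by (cases d) auto
  then have "(u, v) \<in> relD d \<psi> L a'" using uv(1,2) by (intro iffD2[OF relD_mem]) simp
  then show "p \<in> (\<lambda>(u,v). (ts \<sigma> u, ts \<sigma> v)) ` relD d \<psi> L a'" using xy(1) uv by force
next
  fix p assume "p \<in> (\<lambda>(u,v). (ts \<sigma> u, ts \<sigma> v)) ` relD d \<psi> L a'"
  then obtain u v where uv: "(u, v) \<in> relD d \<psi> L a'" "p = (ts \<sigma> u, ts \<sigma> v)" by auto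
  then show "p \<in> relD d \<phi> K a" using assms relD_mem[of u v d \<psi> L a'] relD_mem[of "ts \<sigma> u" "ts \<sigma> v" d \<phi> K a]
    unfolding K_def by (auto simp: eval_ts)
qed

lemma rel_cong: "eval \<phi> a = eval \<phi> a' \<Longrightarrow> relD d \<phi> K a = relD d \<phi> K a'"
  unfolding relD_def right_rel_def left_rel_def by simp

lemma rel_comp:
  "relD d \<phi> K (a @ [c]) = (if d then relD d \<phi> K a O relD d \<phi> K [c] else relD d \<phi> K [c] O relD d \<phi> K a)"
proof (cases d)
  case True
  show ?thesis
  proof (intro equalityI subsetI)
    fix p assume h: "p \<in> relD d \<phi> K (a @ [c])"
    obtain x z where p: "p = (x, z)" by force
    have "(x, z) \<in> relD d \<phi> K (a @ [c])" using h p by simp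
    then have "x \<in> K \<and> z \<in> K \<and> (if d then eval \<phi> x * eval \<phi> (a @ [c]) = eval \<phi> z else eval \<phi> (a @ [c]) * eval \<phi> x = eval \<phi> z)"
      by (rule iffD1[OF relD_mem])
    then have xz: "p = (x, z)" "x \<in> K" "z \<in> K" "eval \<phi> x * eval \<phi> a * \<phi> c = eval \<phi> z"
      using p True by (auto simp: mult.assoc)
    have "eval \<phi> x * eval \<phi> a \<in> eval \<phi> ` K" using K_surj by simp
    then obtain y where y0: "eval \<phi> x * eval \<phi> a = eval \<phi> y" "y \<in> K" by (rule imageE)
    then have y: "y \<in> K" "eval \<phi> y = eval \<phi> x * eval \<phi> a" by auto
    have "(x, y) \<in> relD d \<phi> K a" "(y, z) \<in> relD d \<phi> K [c]" using xz y True by (auto simp: relD_mem)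
    then show "p \<in> (if d then relD d \<phi> K a O relD d \<phi> K [c] else relD d \<phi> K [c] O relD d \<phi> K a)"
      using True xz(1) by auto
  next
    fix p assume "p \<in> (if d then relD d \<phi> K a O relD d \<phi> K [c] else relD d \<phi> K [c] O relD d \<phi> K a)"
    then obtain x y z where "p = (x, z)" "(x, y) \<in> relD d \<phi> K a" "(y, z) \<in> relD d \<phi> K [c]" using True by auto
    then show "p \<in> relD d \<phi> K (a @ [c])" using True by (auto simp: relD_mem simp flip: mult.assoc)
  qed
next
  case False
  show ?thesis
  proof (intro equalityI subsetI)
    fix p assume h: "p \<in> relD d \<phi> K (a @ [c])"
    obtain x z where p: "p = (x, z)" by force
    have "(x, z) \<in> relD d \<phi> K (a @ [c])" using h p by simp
    then have "x \<in> K \<and> z \<in> K \<and> (if d then eval \<phi> x * eval \<phi> (a @ [c]) = eval \<phi> z else eval \<phi> (a @ [c]) * eval \<phi> x = eval \<phi> z)"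
      by (rule iffD1[OF relD_mem])
    then have xz: "p = (x, z)" "x \<in> K" "z \<in> K" "eval \<phi> a * (\<phi> c * eval \<phi> x) = eval \<phi> z"
      using p False by (auto simp: mult.assoc)
    have "\<phi> c * eval \<phi> x \<in> eval \<phi> ` K" using K_surj by simp
    then obtain y where y0: "\<phi> c * eval \<phi> x = eval \<phi> y" "y \<in> K" by (rule imageE)
    then have y: "y \<in> K" "eval \<phi> y = \<phi> c * eval \<phi> x" by auto
    have "(x, y) \<in> relD d \<phi> K [c]" "(y, z) \<in> relD d \<phi> K a" using xz y False by (auto simp: relD_mem mult.assoc)
    then show "p \<in> (if d then relD d \<phi> K a O relD d \<phi> K [c] else relD d \<phi> K [c] O relD d \<phi> K a)"
      using False xz(1) by auto
  next
    fix p assume "p \<in> (if d then relD d \<phi> K a O relD d \<phi> K [c] else relD d \<phi> K [c] O relD d \<phi> K a)"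
    then obtain x y z where "p = (x, z)" "(x, y) \<in> relD d \<phi> K [c]" "(y, z) \<in> relD d \<phi> K a" using False by auto
    then show "p \<in> relD d \<phi> K (a @ [c])" using False by (auto simp: relD_mem mult.assoc)
  qed
qed

lemma rel_mono: "\<forall>(x,y)\<in>relD d \<phi> K a. length x \<le> length y"
proof
  fix p assume h: "p \<in> relD d \<phi> K a"
  obtain x y where p: "p = (x, y)" by force
  have "(x, y) \<in> relD d \<phi> K a" using h p by simp
  then have "x \<in> K \<and> y \<in> K \<and> (if d then eval \<phi> x * eval \<phi> a = eval \<phi> y else eval \<phi> a * eval \<phi> x = eval \<phi> y)"
    by (rule iffD1[OF relD_mem])
  then have h2: "x \<in> K" "y \<in> K" "if d then eval \<phi> x * eval \<phi> a = eval \<phi> y else eval \<phi> a * eval \<phi> x = eval \<phi> y" by auto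
  show "case p of (x, y) \<Rightarrow> length x \<le> length y"
  proof (cases d)
    case True
    then have "lam (eval \<phi> y) = lam (eval \<phi> x) + lam (eval \<phi> a)" using h2 by (metis lam_mult)
    then show ?thesis using K_len h2 p by simp
  next
    case False
    then have "lam (eval \<phi> y) = lam (eval \<phi> a) + lam (eval \<phi> x)" using h2 by (metis lam_mult)
    then show ?thesis using K_len h2 p by simp
  qed
qed

end

context transfer
begin

lemma base_G:
  assumes H: "regular (pair_alph B) ((\<lambda>(u,v). padD s u v) ` relD d \<psi> L a')"
    and ev: "eval \<phi> a = eval \<psi> a'"
  shows "regular (pair_alph C) ((\<lambda>(x,y). padD s x y) ` relD d \<phi> K a)"
proof -
  have sub: "relD d \<psi> L a' \<subseteq> lists B \<times> lists B" using relD_sub LB by blast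
  have drift: "\<forall>(u,v)\<in>relD d \<psi> L a'. length (ts \<sigma> u) \<le> length (ts \<sigma> v) + lam (eval \<psi> a') \<and>
      length (ts \<sigma> v) \<le> length (ts \<sigma> u) + lam (eval \<psi> a')"
  proof
    fix p assume h: "p \<in> relD d \<psi> L a'"
    obtain u v where p: "p = (u, v)" by force
    have "(u, v) \<in> relD d \<psi> L a'" using h p by simp
    then have "u \<in> L \<and> v \<in> L \<and> (if d then eval \<psi> u * eval \<psi> a' = eval \<psi> v else eval \<psi> a' * eval \<psi> u = eval \<psi> v)"
      by (rule iffD1[OF relD_mem])
    then have hh: "if d then eval \<psi> u * eval \<psi> a' = eval \<psi> v else eval \<psi> a' * eval \<psi> u = eval \<psi> v" by simp
    have "lam (eval \<psi> v) = lam (eval \<psi> u) + lam (eval \<psi> a')"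
    proof (cases d)
      case True
      then have "eval \<psi> u * eval \<psi> a' = eval \<psi> v" using hh by simp
      then show ?thesis by (metis lam_mult)
    next
      case False
      then have "eval \<psi> a' * eval \<psi> u = eval \<psi> v" using hh by simp
      then show ?thesis by (metis lam_mult add.commute)
    qed
    then show "case p of (u, v) \<Rightarrow> length (ts \<sigma> u) \<le> length (ts \<sigma> v) + lam (eval \<psi> a') \<and>
      length (ts \<sigma> v) \<le> length (ts \<sigma> u) + lam (eval \<psi> a')" using p len_ts by simp
  qed
  show ?thesis unfolding rel_img[OF ev]
    by (rule G_padD[OF finB finC sub \<sigma>C H drift])
qed

lemma rel_reg_word:
  assumes H: "\<forall>a\<in>short_words B. regular (pair_alph B) ((\<lambda>(u,v). padD s u v) ` relD d \<psi> L a)"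
  shows "ws \<in> lists {c\<in>C. lam (\<phi> c) = 1} \<Longrightarrow> regular (pair_alph C) ((\<lambda>(x,y). padD s x y) ` relD d \<phi> K ws)"
proof (induction ws rule: rev_induct)
  case Nil
  have "[] \<in> short_words B" unfolding short_words_def by simp
  then show ?case using base_G[of s d "[]" "[]"] H by simp
next
  case (snoc c ws)
  then have c: "c \<in> C" "lam (\<phi> c) = 1" and ws: "ws \<in> lists {c\<in>C. lam (\<phi> c) = 1}" by auto
  obtain b where b: "b \<in> B" "\<psi> b = \<phi> c" using atom_gen[OF genB c(2)] by blast
  have "[b] \<in> short_words B" unfolding short_words_def using b by simp
  then have r1: "regular (pair_alph C) ((\<lambda>(x,y). padD s x y) ` relD d \<phi> K [c])"
    using base_G[of s d "[b]" "[c]"] H b by simp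
  have r2: "regular (pair_alph C) ((\<lambda>(x,y). padD s x y) ` relD d \<phi> K ws)" using snoc.IH ws by simp
  show ?case
  proof (cases d)
    case True
    then show ?thesis unfolding rel_comp[of d ws c]
      using comp_padD[OF finC r2 r1 rel_mono rel_mono] by simp
  next
    case False
    then show ?thesis unfolding rel_comp[of d ws c]
      using comp_padD[OF finC r1 r2 rel_mono rel_mono] by simp
  qed
qed

lemma rel_reg:
  assumes H: "\<forall>a\<in>short_words B. regular (pair_alph B) ((\<lambda>(u,v). padD s u v) ` relD d \<psi> L a)"
  shows "regular (pair_alph C) ((\<lambda>(x,y). padD s x y) ` relD d \<phi> K a)"
proof -
  have "eval \<phi> (atw (eval \<phi> a)) = eval \<phi> a" using atw by blast
  then have e: "relD d \<phi> K a = relD d \<phi> K (atw (eval \<phi> a))" by (rule rel_cong[symmetric])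
  have "atw (eval \<phi> a) \<in> lists {c\<in>C. lam (\<phi> c) = 1}" using atw by blast
  then show ?thesis unfolding e by (rule rel_reg_word[OF H])
qed

lemma padR_diag: "padR x x = map (\<lambda>c. (Some c, Some c)) x"
  by (induction x) auto

lemma K_regular:
  assumes H: "regular (pair_alph C) ((\<lambda>(x,y). padR x y) ` right_rel \<phi> K [])"
  shows "regular C K"
proof -
  have "regular C {x \<in> lists C. map (\<lambda>c. (Some c, Some c)) x \<in> (\<lambda>(x,y). padR x y) ` right_rel \<phi> K []}"
    by (rule regular_invmap[OF H finC]) (auto simp: pair_alph_def)
  moreover have "{x \<in> lists C. map (\<lambda>c. (Some c, Some c)) x \<in> (\<lambda>(x,y). padR x y) ` right_rel \<phi> K []} = K"
  proof (intro equalityI subsetI)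
    fix x assume "x \<in> {x \<in> lists C. map (\<lambda>c. (Some c, Some c)) x \<in> (\<lambda>(x,y). padR x y) ` right_rel \<phi> K []}"
    then obtain y y' where yy: "(y, y') \<in> right_rel \<phi> K []" "padR x x = padR y y'" by (auto simp: padR_diag)
    then have "x = y" using padR_inj by metis
    then show "x \<in> K" using yy(1) unfolding right_rel_def by simp
  next
    fix x assume "x \<in> K"
    then have "(x, x) \<in> right_rel \<phi> K []" unfolding right_rel_def by simp
    then have "map (\<lambda>c. (Some c, Some c)) x \<in> (\<lambda>(x,y). padR x y) ` right_rel \<phi> K []"
      unfolding padR_diag[symmetric] by force
    then show "x \<in> {x \<in> lists C. map (\<lambda>c. (Some c, Some c)) x \<in> (\<lambda>(x,y). padR x y) ` right_rel \<phi> K []}"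
      using K_lists \<open>x \<in> K\<close> by auto
  qed
  ultimately show ?thesis by simp
qed

lemma padD_True: "(\<lambda>(u,v). padD True u v) = (\<lambda>(u,v). padR u v)" unfolding padD_def by simp
lemma padD_False: "(\<lambda>(u,v). padD False u v) = (\<lambda>(u,v). padL u v)" unfolding padD_def by simp
lemma relD_True: "relD True = right_rel" unfolding relD_def by (simp add: fun_eq_iff)
lemma relD_False: "relD False = left_rel" unfolding relD_def by (simp add: fun_eq_iff)

lemma auto_transfer:
  assumes "\<forall>a\<in>short_words B. regular (pair_alph B) ((\<lambda>(u, v). padR u v) ` right_rel \<psi> L a)"
  shows "automatic_structure \<phi> C K"
proof -
  have H: "\<forall>a\<in>short_words B. regular (pair_alph B) ((\<lambda>(u,v). padD True u v) ` relD True \<psi> L a)"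
    using assms unfolding padD_True relD_True .
  have R: "\<forall>a. regular (pair_alph C) ((\<lambda>(u, v). padR u v) ` right_rel \<phi> K a)"
    using rel_reg[OF H] unfolding padD_True relD_True by blast
  have "regular C K" using R K_regular by blast
  then show ?thesis unfolding automatic_structure_def
    using finC K_lists K_surj R by simp
qed

lemma biauto_transfer:
  assumes "\<forall>a\<in>short_words B. regular (pair_alph B) ((\<lambda>(u, v). padR u v) ` right_rel \<psi> L a) \<and>
        regular (pair_alph B) ((\<lambda>(u, v). padR u v) ` left_rel \<psi> L a) \<and>
        regular (pair_alph B) ((\<lambda>(u, v). padL u v) ` right_rel \<psi> L a) \<and>
        regular (pair_alph B) ((\<lambda>(u, v). padL u v) ` left_rel \<psi> L a)"
  shows "biautomatic_structure \<phi> C K"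
proof -
  have A1: "\<forall>a\<in>short_words B. regular (pair_alph B) ((\<lambda>(u, v). padR u v) ` right_rel \<psi> L a)"
    and A2: "\<forall>a\<in>short_words B. regular (pair_alph B) ((\<lambda>(u, v). padR u v) ` left_rel \<psi> L a)"
    and A3: "\<forall>a\<in>short_words B. regular (pair_alph B) ((\<lambda>(u, v). padL u v) ` right_rel \<psi> L a)"
    and A4: "\<forall>a\<in>short_words B. regular (pair_alph B) ((\<lambda>(u, v). padL u v) ` left_rel \<psi> L a)"
    using assms by simp_all
  have H1: "\<forall>a\<in>short_words B. regular (pair_alph B) ((\<lambda>(u,v). padD True u v) ` relD True \<psi> L a)"
    using A1 unfolding padD_True relD_True .
  have H2: "\<forall>a\<in>short_words B. regular (pair_alph B) ((\<lambda>(u,v). padD True u v) ` relD False \<psi> L a)"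
    using A2 unfolding padD_True relD_False .
  have H3: "\<forall>a\<in>short_words B. regular (pair_alph B) ((\<lambda>(u,v). padD False u v) ` relD True \<psi> L a)"
    using A3 unfolding padD_False relD_True .
  have H4: "\<forall>a\<in>short_words B. regular (pair_alph B) ((\<lambda>(u,v). padD False u v) ` relD False \<psi> L a)"
    using A4 unfolding padD_False relD_False .
  have R1: "\<forall>a. regular (pair_alph C) ((\<lambda>(u, v). padR u v) ` right_rel \<phi> K a)"
    using rel_reg[OF H1] unfolding padD_True relD_True by blast
  have R2: "\<forall>a. regular (pair_alph C) ((\<lambda>(u, v). padR u v) ` left_rel \<phi> K a)"
    using rel_reg[OF H2] unfolding padD_True relD_False by blast
  have R3: "\<forall>a. regular (pair_alph C) ((\<lambda>(u, v). padL u v) ` right_rel \<phi> K a)"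
    using rel_reg[OF H3] unfolding padD_False relD_True by blast
  have R4: "\<forall>a. regular (pair_alph C) ((\<lambda>(u, v). padL u v) ` left_rel \<phi> K a)"
    using rel_reg[OF H4] unfolding padD_False relD_False by blast
  have "regular C K" using R1 K_regular by blast
  then show ?thesis unfolding biautomatic_structure_def
    using finC K_lists K_surj R1 R2 R3 R4 by simp
qed

end

theorem proposition2p4:
  fixes \<phi> :: "'c \<Rightarrow> 'm::monoid_mult" and C :: "'c set"
  assumes "homogeneous TYPE('m)"
    and "finite C"
    and "\<forall>m. \<exists>w \<in> lists C. eval \<phi> w = m"
  shows "(automatic TYPE('m) \<longrightarrow> (\<exists>K \<subseteq> lists C. automatic_structure \<phi> C K)) \<and>
         (biautomatic TYPE('m) \<longrightarrow> (\<exists>K \<subseteq> lists C. biautomatic_structure \<phi> C K))"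
proof -
  obtain A :: "nat set" and \<phi>A :: "nat \<Rightarrow> 'm" and R where H: "finite A" "finite R" "is_presentation \<phi>A A R"
    "\<forall>(u, v)\<in>R. length u = length v"
    using assms(1) unfolding homogeneous_def by blast
  show ?thesis
  proof (intro conjI impI)
    assume "automatic TYPE('m)"
    then obtain B :: "nat set" and \<psi> :: "nat \<Rightarrow> 'm" and L where S: "automatic_structure \<psi> B L"
      unfolding automatic_def by blast
    interpret t: transfer A \<phi>A R \<phi> C B \<psi> L
      by unfold_locales (use H assms(2,3) S in \<open>auto simp: automatic_structure_def\<close>)
    have "automatic_structure \<phi> C t.K"
      by (rule t.auto_transfer) (use S in \<open>simp add: automatic_structure_def\<close>)
    then show "\<exists>K\<subseteq>lists C. automatic_structure \<phi> C K" using t.K_lists by blast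
  next
    assume "biautomatic TYPE('m)"
    then obtain B :: "nat set" and \<psi> :: "nat \<Rightarrow> 'm" and L where S: "biautomatic_structure \<psi> B L"
      unfolding biautomatic_def by blast
    interpret t: transfer A \<phi>A R \<phi> C B \<psi> L
      by unfold_locales (use H assms(2,3) S in \<open>auto simp: biautomatic_structure_def\<close>)
    have "biautomatic_structure \<phi> C t.K"
      by (rule t.biauto_transfer) (use S in \<open>simp add: biautomatic_structure_def\<close>)
    then show "\<exists>K\<subseteq>lists C. biautomatic_structure \<phi> C K" using t.K_lists by blast
  qed
qed

end
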